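(* Let $\epsilon:B\to A$ be a local augmentation, with section $j:A\to B$ ($\epsilon j=\mathrm{id}_A$). Let $C$ be the subgroup of the group of units of $B$ generated by $$\{(1+ab)(1+ba)^{-1}\mid a,b\in B,\ \epsilon(ab)=\epsilon(ba)=0\}.$$ Then $C$ is a normal subgroup of $\epsilon^{-1}(1)$, and there is a canonical isomorphism $$K_1(B)\cong K_1(A)\oplus \frac{\epsilon^{-1}(1)}{C},$$ given on $K_1(A)$ by the map induced by $j$ and on $\epsilon^{-1}(1)/C$ by sending the class of a unit $u\in\epsilon^{-1}(1)$ to the class $[u]\in K_1(B)$ of the $1\times1$ invertible matrix $(u)$.
   Context: Rings are associative with $1$. A ring homomorphism $f:B\to A$ is local if every square matrix $\alpha$ with entries in $B$ such that $f(\alpha)$ is invertible is itself invertible. An augmentation is a pair of ring homomorphisms $\epsilon:B\to A$, $j:A\to B$ with $\epsilon j=\mathrm{id}_A$; a local augmentation is an augmentation for which $\epsilon$ is local. Note every element of $\epsilon^{-1}(1)$ is a unit of $B$. $K_1(R)$ denotes the abelianization of $\mathrm{GL}(R)=\varinjlim \mathrm{GL}_n(R)$. *)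

theory Defs
  imports Main "HOL-Algebra.Solvable_Groups"
begin

definition ring_hom_cls :: "('b::ring_1 \<Rightarrow> 'a::ring_1) \<Rightarrow> bool" where
  "ring_hom_cls f \<longleftrightarrow> f 1 = 1 \<and> (\<forall>x y. f (x + y) = f x + f y) \<and> (\<forall>x y. f (x * y) = f x * f y)"

definition sq_invertible :: "nat \<Rightarrow> (nat \<Rightarrow> nat \<Rightarrow> 'a::ring_1) \<Rightarrow> bool" where
  "sq_invertible n \<alpha> \<longleftrightarrow> (\<exists>\<beta>. \<forall>i<n. \<forall>k<n.
      (\<Sum>l<n. \<alpha> i l * \<beta> l k) = (if i = k then 1 else 0) \<and>
      (\<Sum>l<n. \<beta> i l * \<alpha> l k) = (if i = k then 1 else 0))"

definition local_hom :: "('b::ring_1 \<Rightarrow> 'a::ring_1) \<Rightarrow> bool" where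
  "local_hom f \<longleftrightarrow> (\<forall>n \<alpha>. sq_invertible n (\<lambda>i k. f (\<alpha> i k)) \<longrightarrow> sq_invertible n \<alpha>)"

definition local_augmentation :: "('b::ring_1 \<Rightarrow> 'a::ring_1) \<Rightarrow> ('a \<Rightarrow> 'b) \<Rightarrow> bool" where
  "local_augmentation \<epsilon> j \<longleftrightarrow> ring_hom_cls \<epsilon> \<and> ring_hom_cls j \<and> (\<forall>x. \<epsilon> (j x) = x) \<and> local_hom \<epsilon>"

(* GL(R) = lim GL_n(R): N x N matrices agreeing with the identity outside some n x n block *)
definition idm :: "nat \<Rightarrow> nat \<Rightarrow> 'a::ring_1" where
  "idm i k = (if i = k then 1 else 0)"

definition fin_mat :: "(nat \<Rightarrow> nat \<Rightarrow> 'a::ring_1) \<Rightarrow> bool" where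
  "fin_mat M \<longleftrightarrow> (\<exists>n. \<forall>i k. (n \<le> i \<or> n \<le> k) \<longrightarrow> M i k = idm i k)"

(* product; for fin_mat matrices each row has finite support *)
definition mmul :: "(nat \<Rightarrow> nat \<Rightarrow> 'a::ring_1) \<Rightarrow> (nat \<Rightarrow> nat \<Rightarrow> 'a) \<Rightarrow> nat \<Rightarrow> nat \<Rightarrow> 'a" where
  "mmul M N i k = (\<Sum>l\<in>{l. M i l \<noteq> 0}. M i l * N l k)"

definition GL_set :: "(nat \<Rightarrow> nat \<Rightarrow> 'a::ring_1) set" where
  "GL_set = {M. fin_mat M \<and> (\<exists>N. fin_mat N \<and> mmul M N = idm \<and> mmul N M = idm)}"

definition GL_group :: "(nat \<Rightarrow> nat \<Rightarrow> 'a::ring_1) monoid" where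
  "GL_group = \<lparr>carrier = GL_set, mult = mmul, one = idm\<rparr>"

definition K1 :: "(nat \<Rightarrow> nat \<Rightarrow> 'a::ring_1) set monoid" where
  "K1 = GL_group Mod (derived GL_group (carrier GL_group))"

definition K1class :: "(nat \<Rightarrow> nat \<Rightarrow> 'a::ring_1) \<Rightarrow> (nat \<Rightarrow> nat \<Rightarrow> 'a) set" where
  "K1class M = derived GL_group (carrier GL_group) #>\<^bsub>GL_group\<^esub> M"

definition K1map :: "('a::ring_1 \<Rightarrow> 'b::ring_1) \<Rightarrow> (nat \<Rightarrow> nat \<Rightarrow> 'a) set \<Rightarrow> (nat \<Rightarrow> nat \<Rightarrow> 'b) set" where
  "K1map f X = the_elem ((\<lambda>M. K1class (\<lambda>i k. f (M i k))) ` X)"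

definition unit_mat :: "'a::ring_1 \<Rightarrow> nat \<Rightarrow> nat \<Rightarrow> 'a" where
  "unit_mat u i k = (if i = 0 \<and> k = 0 then u else idm i k)"

definition K1unit :: "'a::ring_1 set \<Rightarrow> (nat \<Rightarrow> nat \<Rightarrow> 'a) set" where
  "K1unit Y = the_elem ((\<lambda>u. K1class (unit_mat u)) ` Y)"

definition units_grp :: "'a::ring_1 monoid" where
  "units_grp = \<lparr>carrier = {u. \<exists>v. u * v = 1 \<and> v * u = 1}, mult = (*), one = 1\<rparr>"

end

theory Submission
  imports Defs
begin


lemma idm_simp: "idm i k = (if i = k then 1 else 0)" by (simp add: idm_def)

definition bnd :: "nat \<Rightarrow> (nat \<Rightarrow> nat \<Rightarrow> 'a::ring_1) \<Rightarrow> bool" where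
  "bnd n M \<longleftrightarrow> (\<forall>i k. (n \<le> i \<or> n \<le> k) \<longrightarrow> M i k = idm i k)"

definition mm :: "nat \<Rightarrow> (nat \<Rightarrow> nat \<Rightarrow> 'a::ring_1) \<Rightarrow> (nat \<Rightarrow> nat \<Rightarrow> 'a) \<Rightarrow> nat \<Rightarrow> nat \<Rightarrow> 'a" where
  "mm n X Y i k = (\<Sum>l<n. X i l * Y l k)"

lemma fin_mat_bnd: "fin_mat M \<longleftrightarrow> (\<exists>n. bnd n M)"
  by (simp add: fin_mat_def bnd_def)

lemma bnd_mono: "bnd n M \<Longrightarrow> n \<le> m \<Longrightarrow> bnd m M"
  unfolding bnd_def by (meson le_trans)

lemma bnd_out: "bnd n M \<Longrightarrow> n \<le> i \<or> n \<le> k \<Longrightarrow> M i k = idm i k"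
  unfolding bnd_def by blast

lemma bnd_idm: "bnd n idm" by (simp add: bnd_def)

lemma mmul_bnd:
  assumes "bnd n M"
  shows "mmul M N i k = (if i < n then mm n M N i k else N i k)"
proof (cases "i < n")
  case True
  have "mmul M N i k = (\<Sum>l\<in>{l. M i l \<noteq> 0}. M i l * N l k)" by (simp add: mmul_def)
  also have "\<dots> = (\<Sum>l<n. M i l * N l k)"
  proof (rule sum.mono_neutral_left)
    show "{l. M i l \<noteq> 0} \<subseteq> {..<n}"
    proof
      fix l assume "l \<in> {l. M i l \<noteq> 0}"
      then have "M i l \<noteq> 0" by simp
      show "l \<in> {..<n}"
      proof (rule ccontr)
        assume "l \<notin> {..<n}"
        then have "M i l = idm i l" using bnd_out[OF assms] by simp
        with True \<open>l \<notin> _\<close> \<open>M i l \<noteq> 0\<close> show False by (simp add: idm_simp split: if_splits)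
      qed
    qed
  qed auto
  finally show ?thesis using True by (simp add: mm_def)
next
  case False
  then have "{l. M i l \<noteq> 0} = {i}" using bnd_out[OF assms, of i] by (auto simp: idm_simp)
  moreover have "M i i = 1" using bnd_out[OF assms, of i i] False by (simp add: idm_simp)
  ultimately show ?thesis using False by (simp add: mmul_def)
qed

lemma mmul_blk: "bnd n M \<Longrightarrow> i < n \<Longrightarrow> mmul M N i k = mm n M N i k"
  by (simp add: mmul_bnd)

lemma mm_idm_out: assumes "bnd n N" "i < n" "n \<le> k" shows "mm n M N i k = 0"
  unfolding mm_def using assms by (auto intro!: sum.neutral simp: bnd_out idm_simp)

lemma bnd_mmul: assumes "bnd n M" "bnd n N" shows "bnd n (mmul M N)"
  unfolding bnd_def
proof (intro allI impI)
  fix i k assume h: "n \<le> i \<or> n \<le> k"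
  show "mmul M N i k = idm i k"
  proof (cases "i < n")
    case True
    then have "n \<le> k" using h by simp
    then show ?thesis using True mm_idm_out[OF assms(2) True] by (simp add: mmul_bnd[OF assms(1)] idm_simp)
  next
    case False
    then show ?thesis using assms(2) by (simp add: mmul_bnd[OF assms(1)] bnd_out)
  qed
qed

lemma bnd_eqI: assumes "bnd n X" "bnd n Y" "\<And>i k. i < n \<Longrightarrow> k < n \<Longrightarrow> X i k = Y i k"
  shows "X = Y"
proof (intro ext)
  fix i k show "X i k = Y i k"
    using assms by (cases "i < n \<and> k < n") (auto simp: bnd_out not_less)
qed

lemma mm_assoc: "mm n (mm n X Y) Z = mm n X (mm n Y Z)"
proof (intro ext)
  fix i k
  have "mm n (mm n X Y) Z i k = (\<Sum>l<n. (\<Sum>l'<n. X i l' * Y l' l) * Z l k)" by (simp add: mm_def)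
  also have "\<dots> = (\<Sum>l<n. \<Sum>l'<n. X i l' * (Y l' l * Z l k))" by (simp add: sum_distrib_right mult.assoc)
  also have "\<dots> = (\<Sum>l'<n. \<Sum>l<n. X i l' * (Y l' l * Z l k))" by (rule sum.swap)
  also have "\<dots> = mm n X (mm n Y Z) i k" by (simp add: mm_def sum_distrib_left)
  finally show "mm n (mm n X Y) Z i k = mm n X (mm n Y Z) i k" .
qed

lemma mm_cong: assumes "\<And>i k. i < n \<Longrightarrow> k < n \<Longrightarrow> X i k = X' i k"
  "\<And>i k. i < n \<Longrightarrow> k < n \<Longrightarrow> Y i k = Y' i k" "i < n" "k < n"
  shows "mm n X Y i k = mm n X' Y' i k"
  unfolding mm_def using assms by (intro sum.cong) auto

lemma mmul_assoc: assumes "bnd n M" "bnd n N" "bnd n P"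
  shows "mmul (mmul M N) P = mmul M (mmul N P)"
proof (rule bnd_eqI[of n])
  show "bnd n (mmul (mmul M N) P)" "bnd n (mmul M (mmul N P))"
    using assms by (auto intro!: bnd_mmul)
  fix i k assume ik: "i < n" "k < n"
  have "mmul (mmul M N) P i k = mm n (mmul M N) P i k"
    using ik by (simp add: mmul_bnd[OF bnd_mmul[OF assms(1,2)]])
  also have "\<dots> = mm n (mm n M N) P i k"
    using ik by (intro mm_cong) (auto simp: mmul_bnd[OF assms(1)])
  also have "\<dots> = mm n M (mm n N P) i k" by (simp add: mm_assoc)
  also have "\<dots> = mm n M (mmul N P) i k"
    using ik by (intro mm_cong) (auto simp: mmul_bnd[OF assms(2)])
  also have "\<dots> = mmul M (mmul N P) i k"
    using ik by (simp add: mmul_bnd[OF assms(1)])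
  finally show "mmul (mmul M N) P i k = mmul M (mmul N P) i k" .
qed

lemma sum_idm_left: "i < n \<Longrightarrow> (\<Sum>l<n. idm i l * f l) = f i"
  by (simp add: idm_simp if_distrib[where f="\<lambda>x. x * _"] sum.delta cong: if_cong)

lemma sum_idm_right: "k < n \<Longrightarrow> (\<Sum>l<n. f l * idm l k) = f k"
  by (simp add: idm_simp if_distrib[where f="\<lambda>x. _ * x"] sum.delta' cong: if_cong)

lemma mmul_idm_left: "mmul idm M = M"
  by (intro ext) (simp add: mmul_bnd[OF bnd_idm[of 0]])

lemma mmul_idm_right: assumes "bnd n M" shows "mmul M idm = M"
proof (intro ext)
  fix i k
  show "mmul M idm i k = M i k"
  proof (cases "i < n")
    case True
    then show ?thesis
    proof (cases "k < n")
      case True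
      then show ?thesis using \<open>i < n\<close> by (simp add: mmul_bnd[OF assms] mm_def sum_idm_right)
    next
      case False
      then show ?thesis using \<open>i < n\<close> mm_idm_out[OF bnd_idm, of i n k M] assms
        by (simp add: mmul_bnd[OF assms] bnd_out idm_simp)
    qed
  next
    case False
    then show ?thesis by (simp add: mmul_bnd[OF assms] bnd_out[OF assms] idm_simp)
  qed
qed

lemma bnd_common: "bnd n M \<Longrightarrow> bnd m N \<Longrightarrow> bnd (max n m) M \<and> bnd (max n m) N"
  by (auto intro: bnd_mono)

lemma fin_mat_mmul: "fin_mat M \<Longrightarrow> fin_mat N \<Longrightarrow> fin_mat (mmul M N)"
  unfolding fin_mat_bnd by (metis bnd_common bnd_mmul)

lemma mmul_assoc_fin: "fin_mat M \<Longrightarrow> fin_mat N \<Longrightarrow> fin_mat P \<Longrightarrow> mmul (mmul M N) P = mmul M (mmul N P)"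
  unfolding fin_mat_bnd
proof (elim exE)
  fix a b c assume "bnd a M" "bnd b N" "bnd c P"
  then have "bnd (max a (max b c)) M" "bnd (max a (max b c)) N" "bnd (max a (max b c)) P"
    by (auto intro: bnd_mono)
  then show ?thesis by (rule mmul_assoc)
qed

lemma fin_mat_idm: "fin_mat idm" using bnd_idm fin_mat_bnd by blast

lemma mmul_idm_right_fin: "fin_mat M \<Longrightarrow> mmul M idm = M"
  using mmul_idm_right fin_mat_bnd by blast

lemma GL_carrier: "carrier GL_group = GL_set" by (simp add: GL_group_def)
lemma GL_mult: "x \<otimes>\<^bsub>GL_group\<^esub> y = mmul x y" by (simp add: GL_group_def)
lemma GL_one: "\<one>\<^bsub>GL_group\<^esub> = idm" by (simp add: GL_group_def)

lemma GL_group_is_group: "group (GL_group :: (nat \<Rightarrow> nat \<Rightarrow> 'a::ring_1) monoid)"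
proof (rule groupI)
  fix x y :: "nat \<Rightarrow> nat \<Rightarrow> 'a" assume x: "x \<in> carrier GL_group" and y: "y \<in> carrier GL_group"
  from x obtain x' where x': "fin_mat x" "fin_mat x'" "mmul x x' = idm" "mmul x' x = idm"
    by (auto simp: GL_group_def GL_set_def)
  from y obtain y' where y': "fin_mat y" "fin_mat y'" "mmul y y' = idm" "mmul y' y = idm"
    by (auto simp: GL_group_def GL_set_def)
  have "mmul (mmul x y) (mmul y' x') = idm"
    using x' y' by (simp add: mmul_assoc_fin fin_mat_mmul flip: mmul_assoc_fin[of y y' x'] ) (simp add: mmul_idm_left)
  moreover have "mmul (mmul y' x') (mmul x y) = idm"
    using x' y' by (simp add: mmul_assoc_fin fin_mat_mmul flip: mmul_assoc_fin[of x' x y] ) (simp add: mmul_idm_left)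
  ultimately show "x \<otimes>\<^bsub>GL_group\<^esub> y \<in> carrier GL_group"
    using x' y' by (auto simp: GL_group_def GL_set_def fin_mat_mmul intro!: exI[of _ "mmul y' x'"])
next
  show "\<one>\<^bsub>GL_group\<^esub> \<in> carrier GL_group"
    by (auto simp: GL_group_def GL_set_def fin_mat_idm mmul_idm_left)
next
  fix x y z :: "nat \<Rightarrow> nat \<Rightarrow> 'a" assume "x \<in> carrier GL_group" "y \<in> carrier GL_group" "z \<in> carrier GL_group"
  then show "x \<otimes>\<^bsub>GL_group\<^esub> y \<otimes>\<^bsub>GL_group\<^esub> z = x \<otimes>\<^bsub>GL_group\<^esub> (y \<otimes>\<^bsub>GL_group\<^esub> z)"
    by (simp add: GL_group_def GL_set_def mmul_assoc_fin)
next
  fix x :: "nat \<Rightarrow> nat \<Rightarrow> 'a" assume "x \<in> carrier GL_group"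
  then show "\<one>\<^bsub>GL_group\<^esub> \<otimes>\<^bsub>GL_group\<^esub> x = x" by (simp add: GL_group_def mmul_idm_left)
next
  fix x :: "nat \<Rightarrow> nat \<Rightarrow> 'a" assume x: "x \<in> carrier GL_group"
  from x obtain x' where x': "fin_mat x" "fin_mat x'" "mmul x x' = idm" "mmul x' x = idm"
    by (auto simp: GL_group_def GL_set_def)
  then have "x' \<in> carrier GL_group" by (auto simp: GL_group_def GL_set_def)
  then show "\<exists>y\<in>carrier GL_group. y \<otimes>\<^bsub>GL_group\<^esub> x = \<one>\<^bsub>GL_group\<^esub>"
    using x' by (auto simp: GL_group_def)
qed


definition R :: "(nat \<Rightarrow> 'a::ring_1) \<Rightarrow> (nat \<Rightarrow> 'a) \<Rightarrow> nat \<Rightarrow> nat \<Rightarrow> 'a" where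
  "R a b = (\<lambda>i k. idm i k + a i * b k)"

definition vsupp :: "nat \<Rightarrow> (nat \<Rightarrow> 'a::ring_1) \<Rightarrow> bool" where
  "vsupp n a \<longleftrightarrow> (\<forall>i. n \<le> i \<longrightarrow> a i = 0)"

definition ev :: "nat \<Rightarrow> nat \<Rightarrow> 'a::ring_1" where
  "ev t = (\<lambda>k. if k = t then 1 else 0)"

definition dot :: "nat \<Rightarrow> (nat \<Rightarrow> 'a::ring_1) \<Rightarrow> (nat \<Rightarrow> 'a) \<Rightarrow> 'a" where
  "dot n b a = (\<Sum>l<n. b l * a l)"

definition mv :: "nat \<Rightarrow> (nat \<Rightarrow> nat \<Rightarrow> 'a::ring_1) \<Rightarrow> (nat \<Rightarrow> 'a) \<Rightarrow> nat \<Rightarrow> 'a" where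
  "mv n Z a = (\<lambda>i. \<Sum>l<n. Z i l * a l)"

definition vm :: "nat \<Rightarrow> (nat \<Rightarrow> 'a::ring_1) \<Rightarrow> (nat \<Rightarrow> nat \<Rightarrow> 'a) \<Rightarrow> nat \<Rightarrow> 'a" where
  "vm n b Z = (\<lambda>k. \<Sum>l<n. b l * Z l k)"

lemma R_apply: "R a b i k = idm i k + a i * b k" by (simp add: R_def)

lemma vsupp_mono: "vsupp n a \<Longrightarrow> n \<le> m \<Longrightarrow> vsupp m a"
  by (simp add: vsupp_def)

lemma vsupp_ev: "t < n \<Longrightarrow> vsupp n (ev t)" by (simp add: vsupp_def ev_def)

lemma vsupp_uminus: "vsupp n a \<Longrightarrow> vsupp n (\<lambda>i. - a i)" by (simp add: vsupp_def)

lemma bnd_R: "vsupp n a \<Longrightarrow> vsupp n b \<Longrightarrow> bnd n (R a b)"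
  by (simp add: bnd_def vsupp_def R_def)

lemma sum_ev_right: "(\<Sum>l<n. f l * ev t l) = (if t < n then f t else 0)"
  by (simp add: ev_def if_distrib[where f="\<lambda>x. _ * x"] sum.delta' cong: if_cong)

lemma sum_ev_left: "(\<Sum>l<n. ev t l * f l) = (if t < n then f t else 0)"
  by (simp add: ev_def if_distrib[where f="\<lambda>x. x * _"] sum.delta cong: if_cong)

lemma mm_R_left: "i < n \<Longrightarrow> mm n (R a b) Z i k = Z i k + a i * (\<Sum>l<n. b l * Z l k)"
  by (simp add: mm_def R_def distrib_right sum.distrib sum_idm_left sum_distrib_left mult.assoc)

lemma mm_R_right: "k < n \<Longrightarrow> mm n Z (R a b) i k = Z i k + (\<Sum>l<n. Z i l * a l) * b k"
  by (simp add: mm_def R_def distrib_left sum.distrib sum_idm_right sum_distrib_right mult.assoc)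

lemma sum_vsupp_right: "vsupp n a \<Longrightarrow> n \<le> m \<Longrightarrow> (\<Sum>l<m. f l * a l) = (\<Sum>l<n. f l * a l)"
  by (rule sum.mono_neutral_right) (auto simp: vsupp_def)

lemma sum_vsupp_left: "vsupp n a \<Longrightarrow> n \<le> m \<Longrightarrow> (\<Sum>l<m. a l * f l) = (\<Sum>l<n. a l * f l)"
  by (rule sum.mono_neutral_right) (auto simp: vsupp_def)

lemma mmul_R_R:
  assumes "vsupp n a" "vsupp n b" "vsupp n c" "vsupp n d"
  shows "mmul (R a b) (R c d) = (\<lambda>i k. idm i k + a i * b k + c i * d k + a i * dot n b c * d k)"
proof (rule bnd_eqI[of n])
  show "bnd n (mmul (R a b) (R c d))" using assms by (intro bnd_mmul bnd_R)
  show "bnd n (\<lambda>i k. idm i k + a i * b k + c i * d k + a i * dot n b c * d k)"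
    using assms by (simp add: bnd_def vsupp_def)
  fix i k assume ik: "i < n" "k < n"
  have "(\<Sum>l<n. b l * R c d l k) = b k + dot n b c * d k"
    using ik by (simp add: R_def distrib_left sum.distrib sum_idm_right dot_def sum_distrib_right mult.assoc)
  moreover have "mmul (R a b) (R c d) i k = mm n (R a b) (R c d) i k"
    by (rule mmul_blk[OF bnd_R[OF assms(1,2)] ik(1)])
  moreover have "mm n (R a b) (R c d) i k = R c d i k + a i * (\<Sum>l<n. b l * R c d l k)"
    by (rule mm_R_left[OF ik(1)])
  ultimately show "mmul (R a b) (R c d) i k = idm i k + a i * b k + c i * d k + a i * dot n b c * d k"
    by (simp add: R_def distrib_left algebra_simps)
qed

lemma R_inv:
  assumes "vsupp n a" "vsupp n b" "dot n b a = 0"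
  shows "mmul (R a b) (R (\<lambda>i. - a i) b) = idm" "mmul (R (\<lambda>i. - a i) b) (R a b) = idm"
proof -
  have d: "dot n b (\<lambda>i. - a i) = 0" using assms(3) by (simp add: dot_def sum_negf)
  show "mmul (R a b) (R (\<lambda>i. - a i) b) = idm"
    using assms d by (simp add: mmul_R_R[of n] vsupp_uminus)
  show "mmul (R (\<lambda>i. - a i) b) (R a b) = idm"
    using assms by (simp add: mmul_R_R[of n] vsupp_uminus)
qed

lemma R_GL:
  assumes "vsupp n a" "vsupp n b" "dot n b a = 0"
  shows "R a b \<in> carrier GL_group"
  using R_inv[OF assms] bnd_R[OF assms(1,2)] bnd_R[OF vsupp_uminus[OF assms(1)] assms(2)]
  by (auto simp: GL_group_def GL_set_def fin_mat_bnd)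

interpretation GLG: group "GL_group :: (nat \<Rightarrow> nat \<Rightarrow> 'a::ring_1) monoid"
  by (rule GL_group_is_group)

lemma GL_inv_eq: "M \<in> carrier GL_group \<Longrightarrow> N \<in> carrier GL_group \<Longrightarrow> mmul N M = idm
  \<Longrightarrow> inv\<^bsub>GL_group\<^esub> M = N"
  by (rule GLG.inv_equality) (auto simp: GL_group_def)

lemma R_GL_inv:
  assumes "vsupp n a" "vsupp n b" "dot n b a = 0"
  shows "inv\<^bsub>GL_group\<^esub> (R a b) = R (\<lambda>i. - a i) b"
proof -
  have d: "dot n b (\<lambda>i. - a i) = 0" using assms(3) by (simp add: dot_def sum_negf)
  show ?thesis using R_GL[OF assms] R_GL[OF vsupp_uminus[OF assms(1)] assms(2) d] R_inv[OF assms]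
    by (intro GL_inv_eq) auto
qed

lemma GL_fin: "M \<in> carrier GL_group \<Longrightarrow> \<exists>n. bnd n M"
  by (auto simp: GL_group_def GL_set_def fin_mat_bnd)

lemma GL_inv_props: "M \<in> carrier GL_group \<Longrightarrow>
   mmul M (inv\<^bsub>GL_group\<^esub> M) = idm \<and> mmul (inv\<^bsub>GL_group\<^esub> M) M = idm \<and> inv\<^bsub>GL_group\<^esub> M \<in> carrier GL_group"
  using GLG.r_inv[of M] GLG.l_inv[of M] GLG.inv_closed[of M] by (simp add: GL_mult GL_one)

lemma mm_unit_blk: assumes "bnd n Z" "bnd n Zi" "mmul Z Zi = idm" "i < n" "k < n"
  shows "mm n Z Zi i k = idm i k"
  using assms mmul_blk[OF assms(1), of i Zi k] by simp

lemma vsupp_mv: "bnd n Z \<Longrightarrow> vsupp n (mv n Z a)"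
  unfolding vsupp_def mv_def
proof (intro allI impI)
  fix i assume "bnd n Z" "n \<le> i"
  then have "\<And>l. l < n \<Longrightarrow> Z i l = 0" by (auto simp: bnd_out idm_simp)
  then show "(\<Sum>l<n. Z i l * a l) = 0" by simp
qed

lemma vsupp_vm: "bnd n Z \<Longrightarrow> vsupp n (vm n b Z)"
  unfolding vsupp_def vm_def
proof (intro allI impI)
  fix i assume "bnd n Z" "n \<le> i"
  then have "\<And>l. l < n \<Longrightarrow> Z l i = 0" by (auto simp: bnd_out idm_simp)
  then show "(\<Sum>l<n. b l * Z l i) = 0" by simp
qed

lemma conj_R:
  assumes Z: "bnd n Z" "bnd n Zi" "mmul Z Zi = idm" and ab: "vsupp n a" "vsupp n b"
  shows "mmul Z (mmul (R a b) Zi) = R (mv n Z a) (vm n b Zi)"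
proof (rule bnd_eqI[of n])
  show "bnd n (mmul Z (mmul (R a b) Zi))" using Z ab by (intro bnd_mmul bnd_R)
  show "bnd n (R (mv n Z a) (vm n b Zi))" using Z by (intro bnd_R vsupp_mv vsupp_vm)
  fix i k assume ik: "i < n" "k < n"
  have inner: "\<And>l. l < n \<Longrightarrow> mmul (R a b) Zi l k = Zi l k + a l * vm n b Zi k"
    using ik ab by (simp add: mmul_blk[OF bnd_R] mm_R_left vm_def)
  have "mmul Z (mmul (R a b) Zi) i k = (\<Sum>l<n. Z i l * mmul (R a b) Zi l k)"
    using ik by (simp add: mmul_blk[OF Z(1)] mm_def)
  also have "\<dots> = (\<Sum>l<n. Z i l * Zi l k + Z i l * a l * vm n b Zi k)"
    by (intro sum.cong) (auto simp: inner distrib_left mult.assoc)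
  also have "\<dots> = mm n Z Zi i k + mv n Z a i * vm n b Zi k"
    by (simp add: sum.distrib mm_def mv_def sum_distrib_right)
  also have "\<dots> = R (mv n Z a) (vm n b Zi) i k"
    using mm_unit_blk[OF Z ik] by (simp add: R_def)
  finally show "mmul Z (mmul (R a b) Zi) i k = R (mv n Z a) (vm n b Zi) i k" .
qed

lemma dot_conj:
  assumes Z: "bnd n Z" "bnd n Zi" "mmul Zi Z = idm" and ab: "vsupp n a" "vsupp n b"
  shows "dot n (vm n b Zi) (mv n Z a) = dot n b a"
proof -
  have "dot n (vm n b Zi) (mv n Z a) = (\<Sum>k<n. (\<Sum>l<n. b l * Zi l k) * (\<Sum>l'<n. Z k l' * a l'))"
    by (simp add: dot_def vm_def mv_def)
  also have "\<dots> = (\<Sum>k<n. \<Sum>l<n. \<Sum>l'<n. b l * (Zi l k * Z k l') * a l')"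
    by (simp add: sum_product mult.assoc)
  also have "\<dots> = (\<Sum>l<n. \<Sum>k<n. \<Sum>l'<n. b l * (Zi l k * Z k l') * a l')"
    by (rule sum.swap)
  also have "\<dots> = (\<Sum>l<n. \<Sum>l'<n. \<Sum>k<n. b l * (Zi l k * Z k l') * a l')"
    by (intro sum.cong refl sum.swap)
  also have "\<dots> = (\<Sum>l<n. \<Sum>l'<n. b l * mm n Zi Z l l' * a l')"
    by (simp add: mm_def sum_distrib_left sum_distrib_right)
  also have "\<dots> = (\<Sum>l<n. \<Sum>l'<n. b l * idm l l' * a l')"
    by (intro sum.cong refl) (simp add: mm_unit_blk[OF Z(2,1,3)])
  also have "\<dots> = dot n b a"
    unfolding dot_def by (intro sum.cong refl) (simp add: mult.assoc flip: sum_distrib_left add: sum_idm_left)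
  finally show ?thesis .
qed


abbreviation DG :: "(nat \<Rightarrow> nat \<Rightarrow> 'a::ring_1) set" where
  "DG \<equiv> derived GL_group (carrier GL_group)"

definition trunc :: "nat \<Rightarrow> (nat \<Rightarrow> 'a::ring_1) \<Rightarrow> nat \<Rightarrow> 'a" where
  "trunc t g = (\<lambda>i. if i < t then g i else 0)"

definition Umat :: "nat \<Rightarrow> (nat \<Rightarrow> 'a::ring_1) \<Rightarrow> nat \<Rightarrow> nat \<Rightarrow> 'a" where
  "Umat t g = R (trunc t g) (ev t)"

definition Lmat :: "nat \<Rightarrow> (nat \<Rightarrow> 'a::ring_1) \<Rightarrow> nat \<Rightarrow> nat \<Rightarrow> 'a" where
  "Lmat t g = R (ev t) (trunc t g)"

lemma vsupp_trunc: "t \<le> n \<Longrightarrow> vsupp n (trunc t g)" by (simp add: vsupp_def trunc_def)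

lemma sum_idm_left_v: assumes "vsupp n a" shows "(\<Sum>l<n. idm i l * a l) = a i"
proof (cases "i < n")
  case True then show ?thesis by (rule sum_idm_left)
next
  case False then show ?thesis using assms by (auto simp: vsupp_def idm_simp intro!: sum.neutral)
qed

lemma sum_idm_right_v: assumes "vsupp n a" shows "(\<Sum>l<n. a l * idm l k) = a k"
proof (cases "k < n")
  case True then show ?thesis by (rule sum_idm_right)
next
  case False then show ?thesis using assms by (auto simp: vsupp_def idm_simp intro!: sum.neutral)
qed

lemma mv_R: "vsupp n a \<Longrightarrow> mv n (R c d) a = (\<lambda>i. a i + c i * dot n d a)"
  by (simp add: mv_def R_def distrib_right sum.distrib sum_idm_left_v dot_def sum_distrib_left mult.assoc)

lemma vm_R: "vsupp n b \<Longrightarrow> vm n b (R c d) = (\<lambda>k. b k + dot n b c * d k)"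
  by (simp add: vm_def R_def distrib_left sum.distrib sum_idm_right_v dot_def sum_distrib_right mult.assoc)

lemma dot_ev_left: "dot n (ev t) a = (if t < n then a t else 0)"
  by (simp add: dot_def sum_ev_left)

lemma dot_ev_right: "dot n a (ev t) = (if t < n then a t else 0)"
  by (simp add: dot_def sum_ev_right)

lemma dot_uminus_right: "dot n a (\<lambda>i. - b i) = - dot n a b"
  by (simp add: dot_def sum_negf)

lemma R_in_DG:
  assumes P: "vsupp n a" "vsupp n b" "dot n b a = 0"
    and Q: "vsupp n c" "vsupp n d" "dot n d c = 0"
  shows "mmul (R a b) (mmul (R c d) (mmul (R (\<lambda>i. - a i) b) (R (\<lambda>i. - c i) d))) \<in> DG"
proof -
  let ?P = "R a b" and ?Q = "R c d"
  have PG: "?P \<in> carrier GL_group" and QG: "?Q \<in> carrier GL_group"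
    using R_GL P Q by auto
  have "?P \<otimes>\<^bsub>GL_group\<^esub> ?Q \<otimes>\<^bsub>GL_group\<^esub> inv\<^bsub>GL_group\<^esub> ?P \<otimes>\<^bsub>GL_group\<^esub> inv\<^bsub>GL_group\<^esub> ?Q \<in> DG"
    unfolding derived_def using PG QG by (intro generate.incl) blast
  also have "?P \<otimes>\<^bsub>GL_group\<^esub> ?Q \<otimes>\<^bsub>GL_group\<^esub> inv\<^bsub>GL_group\<^esub> ?P \<otimes>\<^bsub>GL_group\<^esub> inv\<^bsub>GL_group\<^esub> ?Q
     = ?P \<otimes>\<^bsub>GL_group\<^esub> (?Q \<otimes>\<^bsub>GL_group\<^esub> (inv\<^bsub>GL_group\<^esub> ?P \<otimes>\<^bsub>GL_group\<^esub> inv\<^bsub>GL_group\<^esub> ?Q))"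
    using PG QG by (simp add: GLG.m_assoc)
  finally show ?thesis using R_GL_inv[OF P] R_GL_inv[OF Q] by (simp add: GL_mult)
qed

lemma Umat_DG: "Umat t g \<in> DG"
proof -
  define m where "m = Suc t"
  define n where "n = Suc m"
  define g' where "g' = trunc t g"
  have v: "vsupp n g'" "vsupp n (ev m)" "vsupp n (ev t)" "vsupp n (\<lambda>i. - g' i)" "vsupp n (\<lambda>i. - ev m i)"
    using vsupp_trunc[of t n g] by (auto simp: g'_def n_def m_def intro: vsupp_ev vsupp_uminus)
  have g'm: "g' m = 0" "g' t = 0" by (auto simp: g'_def m_def trunc_def)
  have d1: "dot n (ev m) g' = 0" using g'm by (simp add: dot_ev_left)
  have d2: "dot n (ev t) (ev m) = 0" by (simp add: dot_ev_left) (simp add: ev_def m_def)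
  have conj: "mmul (R (ev m) (ev t)) (mmul (R (\<lambda>i. - g' i) (ev m)) (R (\<lambda>i. - ev m i) (ev t)))
     = R (mv n (R (ev m) (ev t)) (\<lambda>i. - g' i)) (vm n (ev m) (R (\<lambda>i. - ev m i) (ev t)))"
    using R_inv[OF v(2,3) d2] v by (intro conj_R bnd_R) auto
  have mv: "mv n (R (ev m) (ev t)) (\<lambda>i. - g' i) = (\<lambda>i. - g' i)"
    using v g'm by (simp add: mv_R dot_ev_left n_def)
  have vm: "vm n (ev m) (R (\<lambda>i. - ev m i) (ev t)) = (\<lambda>k. ev m k - ev t k)"
    by (simp add: vm_R[OF v(2)] dot_uminus_right dot_ev_left) (simp add: n_def ev_def fun_eq_iff)
  have v2: "vsupp n (\<lambda>k. ev m k - ev t k)" using v by (simp add: vsupp_def ev_def n_def m_def)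
  have "mmul (R g' (ev m)) (R (\<lambda>i. - g' i) (\<lambda>k. ev m k - ev t k)) = R g' (ev t)"
    unfolding mmul_R_R[OF v(1,2,4) v2] using g'm
    by (simp add: dot_uminus_right dot_ev_left) (simp add: R_def algebra_simps fun_eq_iff)
  then have "mmul (R g' (ev m)) (mmul (R (ev m) (ev t)) (mmul (R (\<lambda>i. - g' i) (ev m)) (R (\<lambda>i. - ev m i) (ev t)))) = Umat t g"
    unfolding conj mv vm by (simp add: Umat_def g'_def)
  moreover have "mmul (R g' (ev m)) (mmul (R (ev m) (ev t)) (mmul (R (\<lambda>i. - g' i) (ev m)) (R (\<lambda>i. - ev m i) (ev t)))) \<in> DG"
    using v d1 d2 by (intro R_in_DG) auto
  ultimately show ?thesis by simp
qed

lemma Lmat_DG: "Lmat t g \<in> DG"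
proof -
  define m where "m = Suc t"
  define n where "n = Suc m"
  define g' where "g' = trunc t g"
  have v: "vsupp n g'" "vsupp n (ev m)" "vsupp n (ev t)" "vsupp n (\<lambda>i. - ev t i)" "vsupp n (\<lambda>i. - ev m i)"
    using vsupp_trunc[of t n g] by (auto simp: g'_def n_def m_def intro: vsupp_ev vsupp_uminus[OF vsupp_ev])
  have g'm: "g' m = 0" "g' t = 0" by (auto simp: g'_def m_def trunc_def)
  have d1: "dot n (ev m) (ev t) = 0" by (simp add: dot_ev_left) (simp add: ev_def m_def)
  have d2: "dot n g' (ev m) = 0" using g'm by (simp add: dot_ev_right)
  have conj: "mmul (R (ev m) g') (mmul (R (\<lambda>i. - ev t i) (ev m)) (R (\<lambda>i. - ev m i) g'))
     = R (mv n (R (ev m) g') (\<lambda>i. - ev t i)) (vm n (ev m) (R (\<lambda>i. - ev m i) g'))"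
    using R_inv[OF v(2,1) d2] v by (intro conj_R bnd_R) auto
  have mv: "mv n (R (ev m) g') (\<lambda>i. - ev t i) = (\<lambda>i. - ev t i)"
    by (simp add: mv_R[OF v(4)] dot_uminus_right dot_ev_right g'm)
  have vm: "vm n (ev m) (R (\<lambda>i. - ev m i) g') = (\<lambda>k. ev m k - g' k)"
    by (simp add: vm_R[OF v(2)] dot_uminus_right dot_ev_left) (simp add: n_def ev_def fun_eq_iff)
  have v2: "vsupp n (\<lambda>k. ev m k - g' k)" using v by (simp add: vsupp_def ev_def n_def m_def)
  have "mmul (R (ev t) (ev m)) (R (\<lambda>i. - ev t i) (\<lambda>k. ev m k - g' k)) = R (ev t) g'"
    unfolding mmul_R_R[OF v(3,2,4) v2] using g'm
    by (simp add: dot_uminus_right dot_ev_left) (simp add: R_def algebra_simps fun_eq_iff ev_def m_def)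
  then have "mmul (R (ev t) (ev m)) (mmul (R (ev m) g') (mmul (R (\<lambda>i. - ev t i) (ev m)) (R (\<lambda>i. - ev m i) g'))) = Lmat t g"
    unfolding conj mv vm by (simp add: Lmat_def g'_def)
  moreover have "mmul (R (ev t) (ev m)) (mmul (R (ev m) g') (mmul (R (\<lambda>i. - ev t i) (ev m)) (R (\<lambda>i. - ev m i) g'))) \<in> DG"
    using v d1 d2 by (intro R_in_DG) auto
  ultimately show ?thesis by simp
qed

lemma K1_comm: "comm_group (K1 :: (nat \<Rightarrow> nat \<Rightarrow> 'a::ring_1) set monoid)"
  unfolding K1_def by (rule GLG.derived_quot_is_comm_group)

interpretation K1G: comm_group "K1 :: (nat \<Rightarrow> nat \<Rightarrow> 'a::ring_1) set monoid"
  by (rule K1_comm)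

lemma DG_normal: "DG \<lhd> GL_group" by (rule GLG.derived_self_is_normal)

lemma DG_subgroup: "subgroup DG GL_group" using DG_normal normal_def by blast

lemma K1class_hom: "K1class \<in> hom GL_group K1"
  unfolding K1class_def[abs_def] K1_def by (rule normal.r_coset_hom_Mod[OF DG_normal])

lemma K1class_mult: "M \<in> carrier GL_group \<Longrightarrow> N \<in> carrier GL_group \<Longrightarrow>
  K1class (mmul M N) = K1class M \<otimes>\<^bsub>K1\<^esub> K1class N"
  using hom_mult[OF K1class_hom] by (simp add: GL_mult)

lemma K1class_carrier: "M \<in> carrier GL_group \<Longrightarrow> K1class M \<in> carrier K1"
  using hom_in_carrier[OF K1class_hom] by blast

lemma K1_one: "\<one>\<^bsub>K1\<^esub> = DG" by (simp add: K1_def)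

lemma K1class_DG: "M \<in> DG \<Longrightarrow> K1class M = \<one>\<^bsub>K1\<^esub>"
  unfolding K1class_def K1_one by (rule subgroup.rcos_const[OF DG_subgroup GL_group_is_group])

lemma K1class_one_iff: "M \<in> carrier GL_group \<Longrightarrow> K1class M = \<one>\<^bsub>K1\<^esub> \<longleftrightarrow> M \<in> DG"
  using K1class_DG GLG.coset_join1[OF _ _ DG_subgroup] unfolding K1class_def K1_one by blast

lemma K1_carrier: "carrier K1 = K1class ` carrier GL_group"
  by (simp add: K1_def K1class_def[abs_def] carrier_FactGroup)

definition dmat :: "nat \<Rightarrow> 'a::ring_1 \<Rightarrow> nat \<Rightarrow> nat \<Rightarrow> 'a" where
  "dmat t x = (\<lambda>i k. if i = t \<and> k = t then x else idm i k)"

lemma dmat_R: "dmat t x = R (ev t) (\<lambda>k. if k = t then x - 1 else 0)"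
  by (auto simp: dmat_def R_def ev_def idm_simp fun_eq_iff)

lemma unit_mat_dmat: "unit_mat x = dmat 0 x"
  by (simp add: unit_mat_def dmat_def fun_eq_iff)

lemma bnd_dmat: "t < n \<Longrightarrow> bnd n (dmat t x)"
  by (auto simp: bnd_def dmat_def)

lemma mmul_dmat_left: "mmul (dmat t x) M = (\<lambda>i k. if i = t then x * M t k else M i k)"
proof (intro ext)
  fix i k
  have b: "bnd (Suc t) (dmat t x)" by (simp add: bnd_dmat)
  show "mmul (dmat t x) M i k = (if i = t then x * M t k else M i k)"
  proof (cases "i < Suc t")
    case True
    have "mmul (dmat t x) M i k = mm (Suc t) (dmat t x) M i k" using True by (simp add: mmul_bnd[OF b])
    also have "\<dots> = M i k + ev t i * (\<Sum>l<Suc t. (if l = t then x - 1 else 0) * M l k)"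
      unfolding dmat_R by (rule mm_R_left[OF True])
    also have "\<dots> = (if i = t then x * M t k else M i k)"
      by (simp add: if_distrib[where f="\<lambda>x. x * _"] sum.delta cong: if_cong) (simp add: ev_def algebra_simps)
    finally show ?thesis .
  next
    case False
    then show ?thesis by (simp add: mmul_bnd[OF b])
  qed
qed

lemma dmat_mult: "mmul (dmat t x) (dmat t y) = dmat t (x * y)"
  by (simp only: mmul_dmat_left) (auto simp: dmat_def fun_eq_iff idm_simp)

lemma dmat_one: "dmat t 1 = idm" by (auto simp: dmat_def idm_def fun_eq_iff)

lemma dmat_GL: assumes "x * y = 1" "y * x = 1" shows "dmat t x \<in> carrier GL_group"
proof -
  have "mmul (dmat t x) (dmat t y) = idm" "mmul (dmat t y) (dmat t x) = idm"
    using assms by (simp_all add: dmat_mult dmat_one)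
  moreover have "fin_mat (dmat t x)" "fin_mat (dmat t y)"
    using bnd_dmat[of t "Suc t"] fin_mat_bnd by blast+
  ultimately show ?thesis by (auto simp: GL_group_def GL_set_def)
qed

definition tr :: "nat \<Rightarrow> nat \<Rightarrow> nat" where
  "tr t i = (if i = 0 then t else if i = t then 0 else i)"

definition sw :: "nat \<Rightarrow> nat \<Rightarrow> nat \<Rightarrow> 'a::ring_1" where
  "sw t = (\<lambda>i k. idm (tr t i) k)"

lemma tr_tr: "tr t (tr t i) = i" by (simp add: tr_def)
lemma tr_lt: "tr t i < Suc t \<longleftrightarrow> i < Suc t" by (auto simp: tr_def)
lemma tr_big: "t < i \<Longrightarrow> tr t i = i" by (simp add: tr_def)

lemma bnd_sw: "bnd (Suc t) (sw t)"
  by (auto simp: bnd_def sw_def tr_def idm_simp)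

lemma mmul_sw_left: "mmul (sw t) M = (\<lambda>i k. M (tr t i) k)"
proof (intro ext)
  fix i k
  show "mmul (sw t) M i k = M (tr t i) k"
  proof (cases "i < Suc t")
    case True
    then have "tr t i < Suc t" by (simp add: tr_lt)
    then show ?thesis using True by (simp add: mmul_bnd[OF bnd_sw]) (simp only: mm_def sw_def sum_idm_left[OF \<open>tr t i < Suc t\<close>])
  next
    case False
    then show ?thesis by (simp add: mmul_bnd[OF bnd_sw] tr_big)
  qed
qed

lemma sw_sw: "mmul (sw t) (sw t) = idm"
  by (simp only: mmul_sw_left) (simp add: sw_def tr_tr fun_eq_iff)

lemma sw_GL: "sw t \<in> carrier GL_group"
  using sw_sw bnd_sw by (auto simp: GL_group_def GL_set_def fin_mat_bnd)

lemma idm_tr: "idm (tr t l) k = idm l (tr t k)"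
  by (auto simp: idm_simp tr_def)

lemma mmul_sw_right: assumes "bnd n M" "t < n" shows "mmul M (sw t) = (\<lambda>i k. M i (tr t k))"
proof (intro ext)
  fix i k
  show "mmul M (sw t) i k = M i (tr t k)"
  proof (cases "i < n")
    case True
    show ?thesis
    proof (cases "k < n")
      case True
      then have "tr t k < n" using assms(2) by (auto simp: tr_def)
      then show ?thesis using \<open>i < n\<close> by (simp add: mmul_bnd[OF assms(1)] mm_def sw_def idm_tr sum_idm_right)
    next
      case False
      then have "tr t k = k" using assms(2) by (auto simp: tr_def)
      moreover have "mm n M (sw t) i k = 0"
        by (rule mm_idm_out[OF bnd_mono[OF bnd_sw, of t n]]) (use assms False \<open>i < n\<close> in auto)
      ultimately show ?thesis using \<open>i < n\<close> False by (simp add: mmul_bnd[OF assms(1)] bnd_out[OF assms(1)] idm_simp)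
    qed
  next
    case False
    then have "tr t i = i" using assms(2) by (auto simp: tr_def)
    then show ?thesis using False by (simp add: mmul_bnd[OF assms(1)] bnd_out[OF assms(1)] sw_def idm_tr)
  qed
qed

lemma sw_dmat_sw: "mmul (sw t) (mmul (dmat t x) (sw t)) = unit_mat x"
  by (simp only: mmul_sw_right[OF bnd_dmat[of t "Suc t"] lessI] mmul_sw_left)
     (auto simp: unit_mat_def dmat_def fun_eq_iff tr_def idm_simp)

lemma K1class_dmat: assumes "x * y = 1" "y * x = 1"
  shows "K1class (dmat t x) = K1class (unit_mat x)"
proof -
  have D: "dmat t x \<in> carrier GL_group" by (rule dmat_GL[OF assms])
  have "K1class (unit_mat x) = K1class (sw t) \<otimes>\<^bsub>K1\<^esub> (K1class (dmat t x) \<otimes>\<^bsub>K1\<^esub> K1class (sw t))"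
    using sw_dmat_sw[of t x] D sw_GL by (metis K1class_mult GLG.m_closed GL_mult)
  also have "\<dots> = K1class (dmat t x) \<otimes>\<^bsub>K1\<^esub> (K1class (sw t) \<otimes>\<^bsub>K1\<^esub> K1class (sw t))"
    using D sw_GL K1class_carrier by (metis K1G.m_lcomm)
  also have "K1class (sw t) \<otimes>\<^bsub>K1\<^esub> K1class (sw t) = \<one>\<^bsub>K1\<^esub>"
    using sw_sw[of t] sw_GL K1class_mult[of "sw t" "sw t"] K1class_DG[of idm]
    by (metis GLG.one_closed GL_one GLG.subgroupE(3) DG_subgroup subgroup.one_closed)
  finally show ?thesis using K1class_carrier[OF D] by simp
qed


definition isunit :: "'a::ring_1 \<Rightarrow> bool" where
  "isunit x \<longleftrightarrow> (\<exists>y. x * y = 1 \<and> y * x = 1)"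

definition rinv :: "'a::ring_1 \<Rightarrow> 'a" where
  "rinv x = (SOME y. x * y = 1 \<and> y * x = 1)"

lemma rinv_r: "isunit x \<Longrightarrow> x * rinv x = 1"
  unfolding isunit_def rinv_def by (rule someI2_ex) auto

lemma rinv_l: "isunit x \<Longrightarrow> rinv x * x = 1"
  unfolding isunit_def rinv_def by (rule someI2_ex) auto

lemma rinv_unique: "x * y = 1 \<Longrightarrow> y * x = 1 \<Longrightarrow> rinv x = y"
proof -
  assume a: "x * y = 1" "y * x = 1"
  then have u: "isunit x" by (auto simp: isunit_def)
  have "rinv x = rinv x * (x * y)" using a by simp
  also have "\<dots> = y" using rinv_l[OF u] by (simp flip: mult.assoc)
  finally show ?thesis .
qed

lemma isunit_mult: "isunit x \<Longrightarrow> isunit y \<Longrightarrow> isunit (x * y)"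
  unfolding isunit_def
proof (elim exE conjE)
  fix a b assume "x * a = 1" "a * x = 1" "y * b = 1" "b * y = 1"
  then have "(x * y) * (b * a) = 1" "(b * a) * (x * y) = 1"
    by (simp_all add: mult.assoc) (simp_all flip: mult.assoc)
  then show "\<exists>z. x * y * z = 1 \<and> z * (x * y) = 1" by blast
qed

lemma isunit_rinv: "isunit x \<Longrightarrow> isunit (rinv x)"
  using rinv_l rinv_r isunit_def by blast

lemma isunit_one: "isunit 1" by (auto simp: isunit_def)

lemma rinv_mult: "isunit x \<Longrightarrow> isunit y \<Longrightarrow> rinv (x * y) = rinv y * rinv x"
proof (rule rinv_unique)
  assume u: "isunit x" "isunit y"
  show "x * y * (rinv y * rinv x) = 1"
    using rinv_r[OF u(1)] rinv_r[OF u(2)] by (simp add: mult.assoc) (simp flip: mult.assoc)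
  show "rinv y * rinv x * (x * y) = 1"
    using rinv_l[OF u(1)] rinv_l[OF u(2)] by (simp add: mult.assoc) (simp flip: mult.assoc)
qed

lemma rinv_one: "rinv 1 = 1" by (rule rinv_unique) auto

definition schur :: "nat \<Rightarrow> (nat \<Rightarrow> nat \<Rightarrow> 'a::ring_1) \<Rightarrow> nat \<Rightarrow> nat \<Rightarrow> 'a" where
  "schur n X = (\<lambda>i k. X i k - X i n * rinv (X n n) * X n k)"

primrec pv :: "nat \<Rightarrow> (nat \<Rightarrow> nat \<Rightarrow> 'a::ring_1) \<Rightarrow> 'a" where
  "pv 0 X = 1"
| "pv (Suc n) X = pv n (schur n X) * X n n"

lemma pv_cong: "(\<And>i k. i < n \<Longrightarrow> k < n \<Longrightarrow> X i k = Y i k) \<Longrightarrow> pv n X = pv n Y"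
proof (induction n arbitrary: X Y)
  case 0 then show ?case by simp
next
  case (Suc n)
  have "pv n (schur n X) = pv n (schur n Y)"
    by (rule Suc.IH) (simp add: schur_def Suc.prems)
  then show ?case by (simp add: Suc.prems)
qed

lemma pv_stab: assumes "bnd n N" "n \<le> m" shows "pv m N = pv n N"
  using assms(2)
proof (induction m)
  case 0 then show ?case by simp
next
  case (Suc m)
  show ?case
  proof (cases "n = Suc m")
    case True then show ?thesis by simp
  next
    case False
    then have nm: "n \<le> m" using Suc.prems by simp
    have "N m m = 1" using bnd_out[OF assms(1)] nm by (simp add: idm_simp)
    moreover have "pv m (schur m N) = pv m N"
      by (rule pv_cong) (use bnd_out[OF assms(1)] nm in \<open>auto simp: schur_def idm_simp\<close>)
    ultimately show ?thesis using Suc.IH[OF nm] by simp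
  qed
qed

definition ext :: "nat \<Rightarrow> (nat \<Rightarrow> nat \<Rightarrow> 'a::ring_1) \<Rightarrow> nat \<Rightarrow> nat \<Rightarrow> 'a" where
  "ext t S = (\<lambda>i k. if i < t \<and> k < t then S i k else idm i k)"

definition dg :: "nat \<Rightarrow> (nat \<Rightarrow> nat \<Rightarrow> 'a::ring_1) \<Rightarrow> 'a \<Rightarrow> nat \<Rightarrow> nat \<Rightarrow> 'a" where
  "dg t S x = (\<lambda>i k. if i < t \<and> k < t then S i k else if i = t \<and> k = t then x else idm i k)"

definition gX :: "nat \<Rightarrow> (nat \<Rightarrow> nat \<Rightarrow> 'a::ring_1) \<Rightarrow> nat \<Rightarrow> 'a" where
  "gX m X = (\<lambda>i. X i m * rinv (X m m))"

definition rX :: "nat \<Rightarrow> (nat \<Rightarrow> nat \<Rightarrow> 'a::ring_1) \<Rightarrow> nat \<Rightarrow> 'a" where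
  "rX m X = (\<lambda>k. rinv (X m m) * X m k)"

lemma bnd_ext: "bnd t (ext t S)" by (simp add: bnd_def ext_def)
lemma bnd_dg: "bnd (Suc t) (dg t S x)" by (auto simp: bnd_def dg_def)
lemma bnd_Umat: "t < n \<Longrightarrow> bnd n (Umat t g)"
  unfolding Umat_def by (intro bnd_R vsupp_trunc vsupp_ev) auto
lemma bnd_Lmat: "t < n \<Longrightarrow> bnd n (Lmat t g)"
  unfolding Lmat_def by (intro bnd_R vsupp_trunc vsupp_ev) auto

lemma mm_Umat_left: "i < Suc m \<Longrightarrow> mm (Suc m) (Umat m g) Z i k = Z i k + trunc m g i * Z m k"
  unfolding Umat_def by (simp only: mm_R_left sum_ev_left) simp

lemma mm_Lmat_right: "k < Suc m \<Longrightarrow> mm (Suc m) Z (Lmat m g) i k = Z i k + Z i m * trunc m g k"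
  unfolding Lmat_def by (simp only: mm_R_right sum_ev_right) simp

lemma mm_dg_left: assumes "i < Suc m"
  shows "mm (Suc m) (dg m S x) Z i k = (if i < m then mm m S Z i k else x * Z m k)"
proof (cases "i < m")
  case True
  have "mm (Suc m) (dg m S x) Z i k = mm m (dg m S x) Z i k + dg m S x i m * Z m k"
    by (simp add: mm_def)
  also have "\<dots> = mm m S Z i k" using True by (simp add: mm_def dg_def idm_simp)
  finally show ?thesis using True by simp
next
  case False
  then have "i = m" using assms by simp
  have "mm m (dg m S x) Z i k = 0" using \<open>i = m\<close> by (simp add: mm_def dg_def idm_simp)
  then show ?thesis using \<open>i = m\<close> by (simp add: mm_def dg_def)
qed

lemma mm_dg_right: assumes "k < Suc m"
  shows "mm (Suc m) Z (dg m S y) i k = (if k < m then mm m Z S i k else Z i m * y)"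
proof (cases "k < m")
  case True
  have "mm (Suc m) Z (dg m S y) i k = mm m Z (dg m S y) i k + Z i m * dg m S y m k"
    by (simp add: mm_def)
  also have "\<dots> = mm m Z S i k" using True by (simp add: mm_def dg_def idm_simp)
  finally show ?thesis using True by simp
next
  case False
  then have "k = m" using assms by simp
  have "mm m Z (dg m S y) i k = 0" using \<open>k = m\<close> by (simp add: mm_def dg_def idm_simp)
  then show ?thesis using \<open>k = m\<close> by (simp add: mm_def dg_def)
qed

lemma factor_blk:
  assumes u: "isunit (X m m)" and ik: "i < Suc m" "k < Suc m"
  shows "mm (Suc m) (Umat m (gX m X)) (mm (Suc m) (dg m (schur m X) (X m m)) (Lmat m (rX m X))) i k = X i k"
proof -
  let ?x = "X m m"
  let ?W = "mm (Suc m) (dg m (schur m X) (X m m)) (Lmat m (rX m X))"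
  have W: "\<And>i'. ?W i' k = dg m (schur m X) ?x i' k + dg m (schur m X) ?x i' m * trunc m (rX m X) k"
    using ik by (simp add: mm_Lmat_right)
  have r: "?x * rinv ?x = 1" "rinv ?x * ?x = 1" using rinv_r[OF u] rinv_l[OF u] by auto
  show ?thesis
    unfolding mm_Umat_left[OF ik(1)] W
  proof (cases "i < m"; cases "k < m")
    assume a: "i < m" "k < m"
    have "X i m * (rinv ?x * ?x) * rinv ?x * X m k = X i m * rinv ?x * X m k" using r by simp
    then show "dg m (schur m X) ?x i k + dg m (schur m X) ?x i m * trunc m (rX m X) k +
      trunc m (gX m X) i * (dg m (schur m X) ?x m k + dg m (schur m X) ?x m m * trunc m (rX m X) k) = X i k"
      using a by (simp add: dg_def trunc_def schur_def gX_def rX_def idm_simp mult.assoc)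
  next
    assume a: "i < m" "\<not> k < m"
    then have "k = m" using ik by simp
    then show "dg m (schur m X) ?x i k + dg m (schur m X) ?x i m * trunc m (rX m X) k +
      trunc m (gX m X) i * (dg m (schur m X) ?x m k + dg m (schur m X) ?x m m * trunc m (rX m X) k) = X i k"
      using a r by (simp add: dg_def trunc_def gX_def idm_simp mult.assoc)
  next
    assume a: "\<not> i < m" "k < m"
    then have "i = m" using ik by simp
    then show "dg m (schur m X) ?x i k + dg m (schur m X) ?x i m * trunc m (rX m X) k +
      trunc m (gX m X) i * (dg m (schur m X) ?x m k + dg m (schur m X) ?x m m * trunc m (rX m X) k) = X i k"
      using a r by (simp add: dg_def trunc_def rX_def idm_simp flip: mult.assoc)
  next
    assume a: "\<not> i < m" "\<not> k < m"
    then have "i = m" "k = m" using ik by auto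
    then show "dg m (schur m X) ?x i k + dg m (schur m X) ?x i m * trunc m (rX m X) k +
      trunc m (gX m X) i * (dg m (schur m X) ?x m k + dg m (schur m X) ?x m m * trunc m (rX m X) k) = X i k"
      by (simp add: dg_def trunc_def)
  qed
qed

lemma pv_Umat_left: assumes "isunit (Z m m)"
  shows "pv (Suc m) (mm (Suc m) (Umat m g) Z) = pv (Suc m) Z"
proof -
  let ?W = "mm (Suc m) (Umat m g) Z"
  have Wmm: "?W m m = Z m m" by (simp add: mm_Umat_left trunc_def)
  have r: "Z m m * rinv (Z m m) = 1" using rinv_r[OF assms] .
  have "pv m (schur m ?W) = pv m (schur m Z)"
  proof (rule pv_cong)
    fix i k assume ik: "i < m" "k < m"
    have "(Z i m + g i * Z m m) * rinv (Z m m) * Z m k = Z i m * rinv (Z m m) * Z m k + g i * Z m k"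
      by (simp add: distrib_right mult.assoc) (simp flip: mult.assoc add: r)
    then show "schur m ?W i k = schur m Z i k"
      using ik Wmm by (simp add: schur_def mm_Umat_left trunc_def)
  qed
  then show ?thesis by (simp add: Wmm)
qed

lemma pv_Lmat_right: assumes "isunit (Z m m)"
  shows "pv (Suc m) (mm (Suc m) Z (Lmat m g)) = pv (Suc m) Z"
proof -
  let ?W = "mm (Suc m) Z (Lmat m g)"
  have Wmm: "?W m m = Z m m" by (simp add: mm_Lmat_right trunc_def)
  have r: "rinv (Z m m) * Z m m = 1" using rinv_l[OF assms] .
  have "pv m (schur m ?W) = pv m (schur m Z)"
  proof (rule pv_cong)
    fix i k assume ik: "i < m" "k < m"
    have "Z i m * rinv (Z m m) * (Z m k + Z m m * g k) = Z i m * rinv (Z m m) * Z m k + Z i m * g k"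
      by (simp add: distrib_left) (simp add: mult.assoc flip: mult.assoc[of "rinv _"] add: r)
    then show "schur m ?W i k = schur m Z i k"
      using ik Wmm by (simp add: schur_def mm_Lmat_right trunc_def)
  qed
  then show ?thesis by (simp add: Wmm)
qed

lemma pv_dg_left: assumes "isunit x" "isunit (Z m m)"
  shows "pv (Suc m) (mm (Suc m) (dg m S x) Z) = pv m (mm m S (schur m Z)) * (x * Z m m)"
proof -
  let ?W = "mm (Suc m) (dg m S x) Z"
  have Wmm: "?W m m = x * Z m m" by (simp add: mm_dg_left)
  have key: "rinv (x * Z m m) * (x * Z m k) = rinv (Z m m) * Z m k" for k
    using rinv_l[OF assms(1)] by (simp add: rinv_mult[OF assms] mult.assoc) (simp flip: mult.assoc)
  have "pv m (schur m ?W) = pv m (mm m S (schur m Z))"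
  proof (rule pv_cong)
    fix i k assume ik: "i < m" "k < m"
    have "schur m ?W i k = mm m S Z i k - mm m S Z i m * (rinv (x * Z m m) * (x * Z m k))"
      using ik by (simp add: schur_def mm_dg_left Wmm mult.assoc)
    also have "\<dots> = mm m S (schur m Z) i k"
      by (simp add: key mm_def schur_def sum_distrib_right right_diff_distrib sum_subtractf mult.assoc)
    finally show "schur m ?W i k = mm m S (schur m Z) i k" .
  qed
  then show ?thesis by (simp add: Wmm)
qed

lemma pv_dg_right: assumes "isunit y" "isunit (Z m m)"
  shows "pv (Suc m) (mm (Suc m) Z (dg m S y)) = pv m (mm m (schur m Z) S) * (Z m m * y)"
proof -
  let ?W = "mm (Suc m) Z (dg m S y)"
  have Wmm: "?W m m = Z m m * y" by (simp add: mm_dg_right)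
  have key: "(Z i m * y) * rinv (Z m m * y) = Z i m * rinv (Z m m)" for i
    using rinv_r[OF assms(1)] by (simp add: rinv_mult[OF assms(2,1)] mult.assoc) (simp flip: mult.assoc)
  have "pv m (schur m ?W) = pv m (mm m (schur m Z) S)"
  proof (rule pv_cong)
    fix i k assume ik: "i < m" "k < m"
    have "schur m ?W i k = mm m Z S i k - ((Z i m * y) * rinv (Z m m * y)) * mm m Z S m k"
      using ik by (simp add: schur_def mm_dg_right Wmm)
    also have "\<dots> = mm m Z S i k - (Z i m * rinv (Z m m)) * mm m Z S m k"
      by (simp only: key)
    also have "\<dots> = mm m (schur m Z) S i k"
      by (simp add: mm_def schur_def sum_distrib_left left_diff_distrib sum_subtractf mult.assoc)
    finally show "schur m ?W i k = mm m (schur m Z) S i k" .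
  qed
  then show ?thesis by (simp add: Wmm)
qed

lemma pv_LU:
  "pv (Suc m) (mm (Suc m) (Lmat m r) (Umat m g)) =
   pv m (\<lambda>i k. idm i k + g i * (- rinv (1 + dot m r g)) * r k) * (1 + dot m r g)"
proof -
  let ?W = "mm (Suc m) (Lmat m r) (Umat m g)"
  have W: "\<And>i k. i < Suc m \<Longrightarrow> k < Suc m \<Longrightarrow> ?W i k = Umat m g i k + ev m i * (\<Sum>l<Suc m. trunc m r l * Umat m g l k)"
    unfolding Lmat_def by (rule mm_R_left)
  have s: "(\<Sum>l<Suc m. trunc m r l * Umat m g l k) = trunc m r k + dot m r g * ev m k" if "k < Suc m" for k
  proof -
    have "(\<Sum>l<Suc m. trunc m r l * Umat m g l k) = (\<Sum>l<m. r l * Umat m g l k)"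
      by (simp add: trunc_def)
    also have "\<dots> = (\<Sum>l<m. r l * idm l k) + dot m r g * ev m k"
      unfolding dot_def sum_distrib_right
      by (simp add: Umat_def R_def distrib_left sum.distrib mult.assoc) (intro sum.cong, auto simp: trunc_def)
    also have "(\<Sum>l<m. r l * idm l k) = trunc m r k"
    proof (cases "k < m")
      case True then show ?thesis by (simp add: sum_idm_right trunc_def)
    next
      case False then show ?thesis by (auto simp: idm_simp trunc_def intro!: sum.neutral)
    qed
    finally show ?thesis .
  qed
  have Wmm: "?W m m = 1 + dot m r g"
    using W[of m m] s[of m] by (simp add: Umat_def R_def trunc_def ev_def idm_simp)
  have "pv m (schur m ?W) = pv m (\<lambda>i k. idm i k + g i * (- rinv (1 + dot m r g)) * r k)"
  proof (rule pv_cong)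
    fix i k assume ik: "i < m" "k < m"
    have "?W i k = idm i k" "?W i m = g i" "?W m k = r k"
      using W[of i k] s[of k] W[of i m] s[of m] W[of m k] ik
      by (auto simp: Umat_def R_def trunc_def ev_def idm_simp)
    then show "schur m ?W i k = idm i k + g i * (- rinv (1 + dot m r g)) * r k"
      by (simp add: schur_def Wmm)
  qed
  then show ?thesis by (simp add: Wmm)
qed

lemma dg_ext: "dg t S x = mmul (ext t S) (dmat t x)"
proof (intro ext)
  fix i k
  show "dg t S x i k = mmul (ext t S) (dmat t x) i k"
  proof (cases "i < t")
    case True
    have "mmul (ext t S) (dmat t x) i k = mm t (ext t S) (dmat t x) i k"
      using True by (simp only: mmul_bnd[OF bnd_ext] if_True)
    also have "\<dots> = (\<Sum>l<t. S i l * idm l k)"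
      unfolding mm_def by (intro sum.cong) (auto simp: ext_def dmat_def True)
    also have "\<dots> = (if k < t then S i k else 0)"
    proof (cases "k < t")
      case True then show ?thesis by (simp add: sum_idm_right)
    next
      case False then show ?thesis by (auto simp: idm_simp intro!: sum.neutral)
    qed
    finally show ?thesis using True by (auto simp: dg_def idm_simp)
  next
    case False
    then show ?thesis by (auto simp: mmul_bnd[OF bnd_ext] dg_def dmat_def)
  qed
qed

lemma decomp:
  assumes b: "bnd (Suc t) N" and u: "isunit (N t t)"
  shows "N = mmul (Umat t (gX t N)) (mmul (dg t (schur t N) (N t t)) (Lmat t (rX t N)))"
proof (rule bnd_eqI[of "Suc t"])
  show "bnd (Suc t) N" by (rule b)
  show "bnd (Suc t) (mmul (Umat t (gX t N)) (mmul (dg t (schur t N) (N t t)) (Lmat t (rX t N))))"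
    by (intro bnd_mmul bnd_Umat bnd_dg bnd_Lmat) auto
  fix i k assume ik: "i < Suc t" "k < Suc t"
  have "mmul (Umat t (gX t N)) (mmul (dg t (schur t N) (N t t)) (Lmat t (rX t N))) i k
    = mm (Suc t) (Umat t (gX t N)) (mmul (dg t (schur t N) (N t t)) (Lmat t (rX t N))) i k"
    by (rule mmul_blk[OF bnd_Umat[OF lessI] ik(1)])
  also have "\<dots> = mm (Suc t) (Umat t (gX t N)) (mm (Suc t) (dg t (schur t N) (N t t)) (Lmat t (rX t N))) i k"
    by (rule mm_cong) (auto simp: mmul_blk[OF bnd_dg] ik)
  finally show "N i k = mmul (Umat t (gX t N)) (mmul (dg t (schur t N) (N t t)) (Lmat t (rX t N))) i k"
    using factor_blk[of N t, OF u ik] by simp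
qed


definition mapm :: "('b::ring_1 \<Rightarrow> 'a::ring_1) \<Rightarrow> (nat \<Rightarrow> nat \<Rightarrow> 'b) \<Rightarrow> nat \<Rightarrow> nat \<Rightarrow> 'a" where
  "mapm f M = (\<lambda>i k. f (M i k))"

lemma rh_one: "ring_hom_cls f \<Longrightarrow> f 1 = 1" by (simp add: ring_hom_cls_def)
lemma rh_add: "ring_hom_cls f \<Longrightarrow> f (x + y) = f x + f y" by (simp add: ring_hom_cls_def)
lemma rh_mult: "ring_hom_cls f \<Longrightarrow> f (x * y) = f x * f y" by (simp add: ring_hom_cls_def)
lemma rh_zero: assumes "ring_hom_cls f" shows "f 0 = 0"
proof -
  have "f 0 = f (0 + 0)" by simp
  also have "\<dots> = f 0 + f 0" by (rule rh_add[OF assms])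
  finally show ?thesis by simp
qed
lemma rh_uminus: assumes "ring_hom_cls f" shows "f (- x) = - f x"
proof -
  have "f x + f (- x) = f (x + - x)" by (rule rh_add[OF assms, symmetric])
  also have "\<dots> = 0" by (simp add: rh_zero[OF assms])
  finally show ?thesis by (rule minus_unique[symmetric])
qed
lemma rh_diff: "ring_hom_cls f \<Longrightarrow> f (x - y) = f x - f y"
  using rh_add[of f x "- y"] rh_uminus[of f y] by (metis diff_conv_add_uminus)
lemma rh_sum: assumes "ring_hom_cls f" shows "f (sum g A) = (\<Sum>a\<in>A. f (g a))"
proof (cases "finite A")
  case True then show ?thesis
    by (induction A rule: finite_induct) (auto simp: rh_zero[OF assms] rh_add[OF assms])
next
  case False then show ?thesis by (simp add: rh_zero[OF assms])
qed
lemma rh_idm: "ring_hom_cls f \<Longrightarrow> f (idm i k) = idm i k"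
  using rh_one[of f] rh_zero[of f] by (simp add: idm_simp)

lemmas rh_simps = rh_one rh_add rh_mult rh_zero rh_uminus rh_diff rh_sum rh_idm

lemma mapm_idm: "ring_hom_cls f \<Longrightarrow> mapm f idm = idm"
  by (simp add: mapm_def rh_idm fun_eq_iff)

lemma bnd_mapm: "ring_hom_cls f \<Longrightarrow> bnd n M \<Longrightarrow> bnd n (mapm f M)"
  by (simp add: bnd_def mapm_def rh_idm)

lemma mapm_mm: assumes f: "ring_hom_cls f" shows "mapm f (mm n M N) = mm n (mapm f M) (mapm f N)"
  by (simp add: mapm_def mm_def rh_sum[OF f] rh_mult[OF f] fun_eq_iff)

lemma mapm_mmul: assumes f: "ring_hom_cls f" and b: "bnd n M" "bnd n N"
  shows "mapm f (mmul M N) = mmul (mapm f M) (mapm f N)"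
proof (rule bnd_eqI[of n])
  show "bnd n (mapm f (mmul M N))" using b f by (intro bnd_mapm bnd_mmul)
  show "bnd n (mmul (mapm f M) (mapm f N))" using b f by (intro bnd_mapm bnd_mmul)
  fix i k assume "i < n" "k < n"
  then show "mapm f (mmul M N) i k = mmul (mapm f M) (mapm f N) i k"
    by (simp only: mmul_blk[OF b(1)] mmul_blk[OF bnd_mapm[OF f b(1)]] mapm_def[of f "mmul M N"]
       flip: mapm_mm[OF f]) (simp add: mapm_def)
qed

lemma mapm_mmul_fin: assumes f: "ring_hom_cls f" and b: "fin_mat M" "fin_mat N"
  shows "mapm f (mmul M N) = mmul (mapm f M) (mapm f N)"
proof -
  obtain a c where "bnd a M" "bnd c N" using b fin_mat_bnd by blast
  then have "bnd (max a c) M" "bnd (max a c) N" by (auto intro: bnd_mono)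
  then show ?thesis by (rule mapm_mmul[OF f])
qed

lemma fin_mat_mapm: "ring_hom_cls f \<Longrightarrow> fin_mat M \<Longrightarrow> fin_mat (mapm f M)"
  unfolding fin_mat_bnd by (metis bnd_mapm)

lemma mapm_GL: assumes f: "ring_hom_cls f" and M: "M \<in> carrier GL_group"
  shows "mapm f M \<in> carrier GL_group"
proof -
  from M obtain N where N: "fin_mat M" "fin_mat N" "mmul M N = idm" "mmul N M = idm"
    by (auto simp: GL_group_def GL_set_def)
  then have "mmul (mapm f M) (mapm f N) = idm" "mmul (mapm f N) (mapm f M) = idm"
    by (simp_all flip: mapm_mmul_fin[OF f] add: mapm_idm[OF f])
  then show ?thesis using N fin_mat_mapm[OF f] by (auto simp: GL_group_def GL_set_def)
qed

lemma GL_fin_mat: "M \<in> carrier GL_group \<Longrightarrow> fin_mat M"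
  by (simp add: GL_group_def GL_set_def)

lemma mapm_hom: fixes f :: "'a::ring_1 \<Rightarrow> 'b::ring_1"
  assumes f: "ring_hom_cls f" shows "mapm f \<in> hom GL_group GL_group"
proof (rule homI)
  fix x :: "nat \<Rightarrow> nat \<Rightarrow> 'a" assume "x \<in> carrier GL_group" then show "mapm f x \<in> carrier GL_group" by (rule mapm_GL[OF f])
next
  fix x y :: "nat \<Rightarrow> nat \<Rightarrow> 'a" assume "x \<in> carrier GL_group" "y \<in> carrier GL_group"
  then show "mapm f (x \<otimes>\<^bsub>GL_group\<^esub> y) = mapm f x \<otimes>\<^bsub>GL_group\<^esub> mapm f y"
    by (simp add: GL_mult mapm_mmul_fin[OF f] GL_fin_mat)
qed

lemma mapm_group_hom: "ring_hom_cls f \<Longrightarrow> group_hom GL_group GL_group (mapm f)"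
  by (simp add: group_hom_def group_hom_axioms_def mapm_hom GL_group_is_group)

lemma mapm_comp: "mapm f (mapm g M) = mapm (\<lambda>x. f (g x)) M"
  by (simp add: mapm_def)

lemma mapm_DG: assumes f: "ring_hom_cls f" and d: "d \<in> DG" shows "mapm f d \<in> DG"
proof -
  interpret h: group_hom GL_group GL_group "mapm f" by (rule mapm_group_hom[OF f])
  have "mapm f ` DG = derived GL_group (mapm f ` carrier GL_group)"
    by (rule h.derived_img[symmetric, OF subset_refl])
  also have "\<dots> \<subseteq> DG" by (rule GLG.mono_derived) (use mapm_GL[OF f] in auto)
  finally show ?thesis using d by auto
qed

lemma K1map_class: assumes f: "ring_hom_cls f" and X: "X \<in> carrier GL_group"
  shows "K1map f (K1class X) = K1class (mapm f X)"
proof -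
  have "(\<lambda>M. K1class (mapm f M)) ` (K1class X) = {K1class (mapm f X)}"
  proof
    show "(\<lambda>M. K1class (mapm f M)) ` K1class X \<subseteq> {K1class (mapm f X)}"
    proof
      fix y assume "y \<in> (\<lambda>M. K1class (mapm f M)) ` K1class X"
      then obtain M where M: "M \<in> K1class X" "y = K1class (mapm f M)" by blast
      from M(1) obtain d where d0: "d \<in> DG" "M = d \<otimes>\<^bsub>GL_group\<^esub> X"
        unfolding K1class_def r_coset_def by blast
      have d: "d \<in> DG" "y = K1class (mapm f (d \<otimes>\<^bsub>GL_group\<^esub> X))" using d0 M(2) by auto
      have dG: "d \<in> carrier GL_group" by (rule subgroup.mem_carrier[OF DG_subgroup d(1)])
      have "y = K1class (mapm f d) \<otimes>\<^bsub>K1\<^esub> K1class (mapm f X)"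
        using d(2) hom_mult[OF mapm_hom[OF f] dG X] K1class_mult[OF mapm_GL[OF f dG] mapm_GL[OF f X]]
        by (simp add: GL_mult)
      also have "\<dots> = K1class (mapm f X)"
        using K1class_DG[OF mapm_DG[OF f d(1)]] K1class_carrier[OF mapm_GL[OF f X]] by simp
      finally show "y \<in> {K1class (mapm f X)}" by simp
    qed
  next
    have "X \<in> K1class X" unfolding K1class_def by (rule GLG.rcos_self[OF X DG_subgroup])
    then show "{K1class (mapm f X)} \<subseteq> (\<lambda>M. K1class (mapm f M)) ` K1class X" by auto
  qed
  then show ?thesis by (simp add: K1map_def mapm_def)
qed

lemma K1map_hom: fixes f :: "'a::ring_1 \<Rightarrow> 'b::ring_1"
  assumes f: "ring_hom_cls f" shows "K1map f \<in> hom (K1 :: (nat \<Rightarrow> nat \<Rightarrow> 'a) set monoid) K1"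
proof (rule homI)
  fix x :: "(nat \<Rightarrow> nat \<Rightarrow> 'a) set" assume "x \<in> carrier K1"
  then obtain X where X: "X \<in> carrier GL_group" "x = K1class X" by (auto simp: K1_carrier)
  then show "K1map f x \<in> carrier K1" by (simp add: K1map_class[OF f] K1class_carrier mapm_GL[OF f])
next
  fix x y :: "(nat \<Rightarrow> nat \<Rightarrow> 'a) set" assume "x \<in> carrier K1" "y \<in> carrier K1"
  then obtain X Y where X: "X \<in> carrier GL_group" "x = K1class X" and Y: "Y \<in> carrier GL_group" "y = K1class Y"
    by (auto simp: K1_carrier)
  have "x \<otimes>\<^bsub>K1\<^esub> y = K1class (mmul X Y)" using X Y by (simp add: K1class_mult)
  moreover have "mmul X Y \<in> carrier GL_group" using X Y GLG.m_closed by (simp add: GL_mult)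
  ultimately show "K1map f (x \<otimes>\<^bsub>K1\<^esub> y) = K1map f x \<otimes>\<^bsub>K1\<^esub> K1map f y"
    using X Y hom_mult[OF mapm_hom[OF f] X(1) Y(1)]
    by (simp add: K1map_class[OF f] K1class_mult mapm_GL[OF f] GL_mult flip: K1class_mult)
qed


lemma unit_mat_GL: "isunit x \<Longrightarrow> unit_mat x \<in> carrier GL_group"
  unfolding unit_mat_dmat isunit_def by (auto intro: dmat_GL)

lemma unit_mat_mult: "unit_mat (x * y) = mmul (unit_mat x) (unit_mat y)"
  by (simp add: unit_mat_dmat dmat_mult)

lemma K1class_unit_mult: "isunit x \<Longrightarrow> isunit y \<Longrightarrow>
  K1class (unit_mat (x * y)) = K1class (unit_mat x) \<otimes>\<^bsub>K1\<^esub> K1class (unit_mat y)"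
  by (simp add: unit_mat_mult K1class_mult unit_mat_GL)

lemma K1class_unit_one: "K1class (unit_mat 1) = \<one>\<^bsub>K1\<^esub>"
  using K1class_DG[OF subgroup.one_closed[OF DG_subgroup]]
  by (simp add: unit_mat_dmat dmat_one GL_one)

lemma K1class_dmat_unit: "isunit x \<Longrightarrow> K1class (dmat t x) = K1class (unit_mat x)"
  unfolding isunit_def using K1class_dmat by blast

lemma DG_GL: "d \<in> DG \<Longrightarrow> d \<in> carrier GL_group"
  by (rule subgroup.mem_carrier[OF DG_subgroup])

lemma decomp_K1:
  assumes b: "bnd (Suc t) N" and u: "isunit (N t t)" and S: "ext t (schur t N) \<in> carrier GL_group"
  shows "K1class N = K1class (ext t (schur t N)) \<otimes>\<^bsub>K1\<^esub> K1class (unit_mat (N t t))"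
proof -
  let ?U = "Umat t (gX t N)" and ?L = "Lmat t (rX t N)" and ?E = "ext t (schur t N)" and ?D = "dmat t (N t t)"
  have UG: "?U \<in> carrier GL_group" "?L \<in> carrier GL_group" using Umat_DG Lmat_DG DG_GL by blast+
  have DGm: "?D \<in> carrier GL_group" using u dmat_GL isunit_def by blast
  have e: "N = mmul ?U (mmul (mmul ?E ?D) ?L)" using decomp[OF b u] by (simp add: dg_ext)
  have m1: "mmul ?E ?D \<in> carrier GL_group" using GLG.m_closed[OF S DGm] by (simp add: GL_mult)
  have m2: "mmul (mmul ?E ?D) ?L \<in> carrier GL_group" using GLG.m_closed[OF m1 UG(2)] by (simp add: GL_mult)
  from e have "K1class N = K1class (mmul ?U (mmul (mmul ?E ?D) ?L))" by (rule arg_cong)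
  also have "\<dots> = K1class ?U \<otimes>\<^bsub>K1\<^esub> ((K1class ?E \<otimes>\<^bsub>K1\<^esub> K1class ?D) \<otimes>\<^bsub>K1\<^esub> K1class ?L)"
    by (simp only: K1class_mult[OF UG(1) m2] K1class_mult[OF m1 UG(2)] K1class_mult[OF S DGm])
  finally have "K1class N = K1class ?U \<otimes>\<^bsub>K1\<^esub> ((K1class ?E \<otimes>\<^bsub>K1\<^esub> K1class ?D) \<otimes>\<^bsub>K1\<^esub> K1class ?L)" .
  also have "\<dots> = K1class ?E \<otimes>\<^bsub>K1\<^esub> K1class (unit_mat (N t t))"
  proof -
    have "K1class ?U = \<one>\<^bsub>K1\<^esub>" by (rule K1class_DG[OF Umat_DG])
    moreover have "K1class ?L = \<one>\<^bsub>K1\<^esub>" by (rule K1class_DG[OF Lmat_DG])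
    moreover have "K1class ?D = K1class (unit_mat (N t t))" by (rule K1class_dmat_unit[OF u])
    ultimately show ?thesis
      using K1class_carrier[OF S] K1class_carrier[OF DGm] by simp
  qed
  finally show ?thesis .
qed

lemma K1class_unit_swap:
  assumes u1: "isunit (1 + a * b)" and u2: "isunit (1 + b * a)"
  shows "K1class (unit_mat (1 + a * b)) = K1class (unit_mat (1 + b * a))"
proof -
  let ?N = "mmul (Lmat 1 (\<lambda>_. b)) (Umat 1 (\<lambda>_. a))"
  have v: "vsupp 2 (ev 1)" "vsupp 2 (trunc 1 (\<lambda>_. b))" "vsupp 2 (trunc 1 (\<lambda>_. a))"
    by (auto intro: vsupp_ev vsupp_trunc)
  have N: "?N = (\<lambda>i k. idm i k + ev 1 i * trunc 1 (\<lambda>_. b) k + trunc 1 (\<lambda>_. a) i * ev 1 k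
      + ev 1 i * dot 2 (trunc 1 (\<lambda>_. b)) (trunc 1 (\<lambda>_. a)) * ev 1 k)"
    unfolding Lmat_def Umat_def by (rule mmul_R_R[OF v(1,2,3,1)])
  have dt: "dot 2 (trunc 1 (\<lambda>_. b)) (trunc 1 (\<lambda>_. a)) = b * a"
    unfolding dot_def by (simp add: trunc_def numeral_2_eq_2)
  have N11: "?N 1 1 = 1 + b * a" unfolding N dt by (simp add: ev_def trunc_def idm_simp)
  have b2: "bnd (Suc 1) ?N" by (intro bnd_mmul bnd_Lmat bnd_Umat) auto
  have NDG: "?N \<in> DG"
    using Lmat_DG Umat_DG DG_subgroup subgroup.m_closed by (metis GL_mult)
  let ?s = "schur 1 ?N 0 0"
  have s: "?s = 1 - a * rinv (1 + b * a) * b"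
    unfolding schur_def N dt by (simp add: ev_def trunc_def idm_simp)
  have r1: "(1 + b * a) * rinv (1 + b * a) = 1" "rinv (1 + b * a) * (1 + b * a) = 1"
    using rinv_r[OF u2] rinv_l[OF u2] by auto
  have "(1 + a * b) * ?s = 1"
  proof -
    have "(1 + a * b) * ?s = 1 + a * b - a * ((1 + b * a) * rinv (1 + b * a)) * b"
      unfolding s by (simp add: algebra_simps)
    then show ?thesis using r1 by simp
  qed
  moreover have "?s * (1 + a * b) = 1"
  proof -
    have "?s * (1 + a * b) = 1 + a * b - a * (rinv (1 + b * a) * (1 + b * a)) * b"
      unfolding s by (simp add: algebra_simps)
    then show ?thesis using r1 by simp
  qed
  ultimately have sinv: "?s = rinv (1 + a * b)" using rinv_unique by metis
  have ext1: "ext 1 (schur 1 ?N) = unit_mat ?s"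
    by (auto simp: ext_def unit_mat_def fun_eq_iff)
  have us: "isunit ?s" using sinv isunit_rinv[OF u1] by simp
  have "\<one>\<^bsub>K1\<^esub> = K1class ?N" using K1class_DG[OF NDG] by simp
  also have "\<dots> = K1class (unit_mat ?s) \<otimes>\<^bsub>K1\<^esub> K1class (unit_mat (1 + b * a))"
    using decomp_K1[OF b2] N11 u2 ext1 unit_mat_GL[OF us] by simp
  finally have e: "\<one>\<^bsub>K1\<^esub> = K1class (unit_mat (rinv (1 + a * b))) \<otimes>\<^bsub>K1\<^esub> K1class (unit_mat (1 + b * a))"
    using sinv by simp
  have "K1class (unit_mat (1 + a * b)) \<otimes>\<^bsub>K1\<^esub> K1class (unit_mat (rinv (1 + a * b))) = \<one>\<^bsub>K1\<^esub>"
    using K1class_unit_mult[OF u1 isunit_rinv[OF u1]] unfolding rinv_r[OF u1] K1class_unit_one by simp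
  note ab = this
  have c: "K1class (unit_mat (1 + a * b)) \<in> carrier K1" "K1class (unit_mat (rinv (1 + a * b))) \<in> carrier K1"
    "K1class (unit_mat (1 + b * a)) \<in> carrier K1"
    using K1class_carrier unit_mat_GL u1 u2 isunit_rinv by blast+
  have "K1class (unit_mat (1 + a * b)) = K1class (unit_mat (1 + a * b)) \<otimes>\<^bsub>K1\<^esub> \<one>\<^bsub>K1\<^esub>"
    using c by simp
  also have "\<dots> = (K1class (unit_mat (1 + a * b)) \<otimes>\<^bsub>K1\<^esub> K1class (unit_mat (rinv (1 + a * b))))
       \<otimes>\<^bsub>K1\<^esub> K1class (unit_mat (1 + b * a))"
    by (subst e) (simp add: c K1G.m_assoc)
  also have "\<dots> = K1class (unit_mat (1 + b * a))" using ab c by simp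
  finally show ?thesis .
qed


lemma units_grp_carrier: "carrier (units_grp :: 'a::ring_1 monoid) = {u. isunit u}"
  by (simp add: units_grp_def isunit_def)

lemma units_grp_mult: "x \<otimes>\<^bsub>(units_grp :: 'a::ring_1 monoid)\<^esub> y = x * y"
  by (simp add: units_grp_def)

lemma units_grp_one: "\<one>\<^bsub>(units_grp :: 'a::ring_1 monoid)\<^esub> = 1"
  by (simp add: units_grp_def)

lemma units_grp_group: "group (units_grp :: 'a::ring_1 monoid)"
proof (rule groupI)
  fix x y :: 'a assume "x \<in> carrier units_grp" "y \<in> carrier units_grp"
  then show "x \<otimes>\<^bsub>units_grp\<^esub> y \<in> carrier units_grp"
    by (simp add: units_grp_carrier units_grp_mult isunit_mult)
next
  show "\<one>\<^bsub>units_grp\<^esub> \<in> carrier (units_grp :: 'a monoid)"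
    by (simp add: units_grp_carrier units_grp_one isunit_one)
next
  fix x y z :: 'a
  show "x \<otimes>\<^bsub>units_grp\<^esub> y \<otimes>\<^bsub>units_grp\<^esub> z = x \<otimes>\<^bsub>units_grp\<^esub> (y \<otimes>\<^bsub>units_grp\<^esub> z)"
    by (simp add: units_grp_mult mult.assoc)
next
  fix x :: 'a show "\<one>\<^bsub>units_grp\<^esub> \<otimes>\<^bsub>units_grp\<^esub> x = x" by (simp add: units_grp_mult units_grp_one)
next
  fix x :: 'a assume "x \<in> carrier units_grp"
  then show "\<exists>y\<in>carrier units_grp. y \<otimes>\<^bsub>units_grp\<^esub> x = \<one>\<^bsub>units_grp\<^esub>"
    by (auto simp: units_grp_carrier units_grp_mult units_grp_one intro!: bexI[of _ "rinv x"]
        rinv_l isunit_rinv)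
qed

interpretation UGg: group "units_grp :: 'a::ring_1 monoid" by (rule units_grp_group)

lemma units_grp_inv: "isunit u \<Longrightarrow> inv\<^bsub>(units_grp :: 'a::ring_1 monoid)\<^esub> u = rinv u"
  by (rule UGg.inv_equality) (simp_all add: units_grp_mult units_grp_one units_grp_carrier rinv_l isunit_rinv)

definition Pn :: "('b::ring_1 \<Rightarrow> 'a::ring_1) \<Rightarrow> nat \<Rightarrow> (nat \<Rightarrow> nat \<Rightarrow> 'b) \<Rightarrow> bool" where
  "Pn e n X \<longleftrightarrow> (\<forall>i<n. \<forall>k<n. e (X i k) = idm i k)"

locale augm =
  fixes eps :: "'b::ring_1 \<Rightarrow> 'a::ring_1" and j :: "'a \<Rightarrow> 'b"
  assumes la: "local_augmentation eps j"
begin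

lemma eps_rh: "ring_hom_cls eps" using la by (simp add: local_augmentation_def)
lemma j_rh: "ring_hom_cls j" using la by (simp add: local_augmentation_def)
lemma eps_j: "eps (j x) = x" using la by (simp add: local_augmentation_def)
lemma eps_loc: "local_hom eps" using la by (simp add: local_augmentation_def)

lemmas eps_simps[simp] = rh_one[OF eps_rh] rh_add[OF eps_rh] rh_mult[OF eps_rh] rh_zero[OF eps_rh]
  rh_uminus[OF eps_rh] rh_diff[OF eps_rh] rh_sum[OF eps_rh] rh_idm[OF eps_rh]

definition E1 :: "'b set" where "E1 = {u. eps u = 1}"

lemma E1_iff[simp]: "u \<in> E1 \<longleftrightarrow> eps u = 1" by (simp add: E1_def)

lemma E1_unit: assumes "eps x = 1" shows "isunit x"
proof -
  have "sq_invertible 1 (\<lambda>i k. eps ((\<lambda>i k. x) i k))"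
    unfolding sq_invertible_def using assms by (intro exI[of _ "\<lambda>i k. 1"]) simp
  moreover have L: "\<And>n \<alpha>. sq_invertible n (\<lambda>i k. eps (\<alpha> i k)) \<Longrightarrow> sq_invertible n \<alpha>"
    using eps_loc unfolding local_hom_def by blast
  ultimately have "sq_invertible 1 (\<lambda>i k. x)" using L[of 1 "\<lambda>i k. x"] by simp
  then obtain \<beta> where "x * \<beta> 0 0 = 1" "\<beta> 0 0 * x = 1" unfolding sq_invertible_def by auto
  then show ?thesis unfolding isunit_def by blast
qed

lemma eps_rinv: "eps x = 1 \<Longrightarrow> eps (rinv x) = 1"
  using rinv_r[OF E1_unit, of x] by (metis eps_simps(1,3) mult_1_left)

lemma local_GL: assumes b: "bnd n M" and e: "\<And>i k. eps (M i k) = idm i k"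
  shows "M \<in> carrier GL_group"
proof -
  have L: "\<And>n \<alpha>. sq_invertible n (\<lambda>i k. eps (\<alpha> i k)) \<Longrightarrow> sq_invertible n \<alpha>"
    using eps_loc unfolding local_hom_def by blast
  have "sq_invertible n (\<lambda>i k. eps (M i k))"
    unfolding sq_invertible_def e by (intro exI[of _ idm]) (simp add: sum_idm_left, simp add: idm_simp)
  then have "sq_invertible n M" by (rule L)
  then obtain \<beta> where \<beta>: "\<And>i k. i < n \<Longrightarrow> k < n \<Longrightarrow> (\<Sum>l<n. M i l * \<beta> l k) = idm i k \<and> (\<Sum>l<n. \<beta> i l * M l k) = idm i k"
    unfolding sq_invertible_def idm_simp by blast
  define N where "N = (\<lambda>i k. if i < n \<and> k < n then \<beta> i k else idm i k)"
  have bN: "bnd n N" by (simp add: bnd_def N_def)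
  have "mmul M N = idm"
  proof (rule bnd_eqI[OF bnd_mmul[OF b bN] bnd_idm])
    fix i k assume ik: "i < n" "k < n"
    have "mmul M N i k = (\<Sum>l<n. M i l * \<beta> l k)"
      using ik by (simp add: mmul_blk[OF b] mm_def N_def)
    then show "mmul M N i k = idm i k" using \<beta>[OF ik] by simp
  qed
  moreover have "mmul N M = idm"
  proof (rule bnd_eqI[OF bnd_mmul[OF bN b] bnd_idm])
    fix i k assume ik: "i < n" "k < n"
    have "mmul N M i k = mm n N M i k" by (rule mmul_blk[OF bN ik(1)])
    also have "\<dots> = (\<Sum>l<n. \<beta> i l * M l k)"
      unfolding mm_def by (intro sum.cong) (auto simp: N_def ik)
    finally have "mmul N M i k = (\<Sum>l<n. \<beta> i l * M l k)" .
    then show "mmul N M i k = idm i k" using \<beta>[OF ik] by simp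
  qed
  ultimately show ?thesis using b bN by (auto simp: GL_group_def GL_set_def fin_mat_bnd)
qed

abbreviation UG :: "'b monoid" where "UG \<equiv> units_grp"

definition E1G :: "'b monoid" where "E1G = UG\<lparr>carrier := E1\<rparr>"

definition gens :: "'b set" where
  "gens = {(1 + a * b) * inv\<^bsub>UG\<^esub> (1 + b * a) | a b. eps (a * b) = 0 \<and> eps (b * a) = 0}"

definition Cs :: "'b set" where "Cs = generate UG gens"

definition Q :: "'b set monoid" where "Q = E1G Mod Cs"

definition hq :: "'b \<Rightarrow> 'b set" where "hq u = Cs #>\<^bsub>E1G\<^esub> u"

lemma E1_sub: "subgroup E1 UG"
proof (rule UGg.subgroupI)
  show "E1 \<subseteq> carrier UG" by (auto simp: units_grp_carrier E1_unit)
  have "1 \<in> E1" by simp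
  then show "E1 \<noteq> {}" by (metis empty_iff)
  fix a assume "a \<in> E1"
  then show "inv\<^bsub>UG\<^esub> a \<in> E1" by (simp add: units_grp_inv E1_unit eps_rinv)
next
  fix a b assume "a \<in> E1" "b \<in> E1"
  then show "a \<otimes>\<^bsub>UG\<^esub> b \<in> E1" by (simp add: units_grp_mult)
qed

lemma E1G_group: "group E1G"
  unfolding E1G_def by (rule UGg.subgroup_imp_group[OF E1_sub])

lemma E1G_simps: "carrier E1G = E1" "x \<otimes>\<^bsub>E1G\<^esub> y = x * y" "\<one>\<^bsub>E1G\<^esub> = 1"
  by (simp_all add: E1G_def units_grp_mult units_grp_one)

lemma E1G_inv: assumes "u \<in> E1" shows "inv\<^bsub>E1G\<^esub> u = rinv u"
proof -
  have "inv\<^bsub>E1G\<^esub> u = inv\<^bsub>UG\<^esub> u" unfolding E1G_def by (rule UGg.m_inv_consistent[OF E1_sub assms])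
  also have "\<dots> = rinv u" by (rule units_grp_inv[OF E1_unit]) (use assms in simp)
  finally show ?thesis .
qed

lemma gens_E1: "gens \<subseteq> E1"
proof
  fix g assume "g \<in> gens"
  then obtain a b where ab: "g = (1 + a * b) * inv\<^bsub>UG\<^esub> (1 + b * a)" "eps (a * b) = 0" "eps (b * a) = 0"
    by (auto simp: gens_def)
  have "eps (1 + b * a) = 1" using ab by simp
  then show "g \<in> E1" using ab by (simp add: units_grp_inv E1_unit eps_rinv del: eps_simps(2) add: eps_simps(2))
qed

lemma Cs_sub_UG: "subgroup Cs UG"
  unfolding Cs_def using gens_E1 E1_sub subgroup.subset by (intro UGg.generate_is_subgroup) blast

lemma Cs_E1: "Cs \<subseteq> E1"
  unfolding Cs_def by (rule UGg.generate_subgroup_incl[OF gens_E1 E1_sub])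

lemma Cs_sub: "subgroup Cs E1G"
  unfolding E1G_def by (rule UGg.subgroup_incl[OF Cs_sub_UG E1_sub Cs_E1])

lemma gens_Cs: "gens \<subseteq> Cs" unfolding Cs_def by (rule generate.incl[of _ gens UG, THEN subsetI])

lemma comm_gens: assumes "u \<in> E1" "v \<in> E1" shows "u * v * rinv u * rinv v \<in> gens"
proof -
  have uu: "isunit u" "isunit v" using assms E1_unit by auto
  define b where "b = v - rinv u"
  have ab: "u * b = u * v - 1" "b * u = v * u - 1"
    using rinv_r[OF uu(1)] rinv_l[OF uu(1)] by (simp_all add: b_def algebra_simps)
  have "(1 + u * b) * inv\<^bsub>UG\<^esub> (1 + b * u) = u * v * rinv (v * u)"
    using ab isunit_mult[OF uu(2,1)] by (simp add: units_grp_inv)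
  also have "\<dots> = u * v * rinv u * rinv v" by (simp add: rinv_mult[OF uu(2,1)] mult.assoc)
  finally have "(1 + u * b) * inv\<^bsub>UG\<^esub> (1 + b * u) = u * v * rinv u * rinv v" .
  moreover have "eps (u * b) = 0" "eps (b * u) = 0" using ab assms by simp_all
  ultimately show ?thesis unfolding gens_def by (intro CollectI exI[of _ u] exI[of _ b]) simp
qed

lemma Cs_normal: "Cs \<lhd> E1G"
proof (rule group.normal_invI[OF E1G_group Cs_sub])
  fix x h assume x: "x \<in> carrier E1G" and h: "h \<in> Cs"
  have xE: "x \<in> E1" and hE: "h \<in> E1" using x h Cs_E1 by (auto simp: E1G_simps)
  have "x * h * rinv x * rinv h \<in> Cs" using comm_gens[OF xE hE] gens_Cs by blast
  then have "x * h * rinv x * rinv h * h \<in> Cs"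
    using subgroup.m_closed[OF Cs_sub_UG _ h] by (simp add: units_grp_mult)
  moreover have "x * h * rinv x * rinv h * h = x * h * rinv x"
    using rinv_l[OF E1_unit, of h] hE by (simp add: mult.assoc)
  ultimately show "x \<otimes>\<^bsub>E1G\<^esub> h \<otimes>\<^bsub>E1G\<^esub> inv\<^bsub>E1G\<^esub> x \<in> Cs"
    using xE by (simp add: E1G_simps E1G_inv)
qed

interpretation CsN: normal Cs E1G by (rule Cs_normal)

lemma Q_group: "group Q" unfolding Q_def by (rule CsN.factorgroup_is_group)

lemma hq_hom: "hq \<in> hom E1G Q"
  unfolding hq_def[abs_def] Q_def by (rule CsN.r_coset_hom_Mod)

lemma hq_carrier: "u \<in> E1 \<Longrightarrow> hq u \<in> carrier Q"
  using hom_in_carrier[OF hq_hom] by (simp add: E1G_simps)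

lemma hq_mult: "u \<in> E1 \<Longrightarrow> v \<in> E1 \<Longrightarrow> hq (u * v) = hq u \<otimes>\<^bsub>Q\<^esub> hq v"
  using hom_mult[OF hq_hom] by (simp add: E1G_simps)

lemma Q_carrier: "carrier Q = hq ` E1"
  by (simp add: Q_def hq_def[abs_def] carrier_FactGroup E1G_simps)

lemma Q_one: "\<one>\<^bsub>Q\<^esub> = Cs" by (simp add: Q_def)

lemma hq_Cs: "c \<in> Cs \<Longrightarrow> hq c = \<one>\<^bsub>Q\<^esub>"
  unfolding hq_def Q_one by (rule subgroup.rcos_const[OF Cs_sub E1G_group])

lemma hq_one: "hq 1 = \<one>\<^bsub>Q\<^esub>"
  using hq_Cs subgroup.one_closed[OF Cs_sub] by (simp add: E1G_simps)

lemma hq_eq_one_iff: "u \<in> E1 \<Longrightarrow> hq u = \<one>\<^bsub>Q\<^esub> \<longleftrightarrow> u \<in> Cs"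
  using hq_Cs group.coset_join1[OF E1G_group _ _ Cs_sub] unfolding hq_def Q_one by (auto simp: E1G_simps)

lemma Q_comm: "comm_group Q"
proof (rule group.group_comm_groupI[OF Q_group])
  fix X Y assume "X \<in> carrier Q" "Y \<in> carrier Q"
  then obtain u v where uv: "u \<in> E1" "v \<in> E1" "X = hq u" "Y = hq v" by (auto simp: Q_carrier)
  have uu: "isunit u" "isunit v" using uv E1_unit by auto
  have uvE: "u * v \<in> E1" "v * u \<in> E1" using uv by auto
  have "u * v * rinv (v * u) \<in> Cs"
    using comm_gens[OF uv(1,2)] gens_Cs by (auto simp: rinv_mult[OF uu(2,1)] mult.assoc)
  then have "u * v \<in> Cs #>\<^bsub>E1G\<^esub> (v * u)"
    using subgroup.rcos_module_rev[OF Cs_sub E1G_group] uvE by (simp add: E1G_simps E1G_inv)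
  then have "Cs #>\<^bsub>E1G\<^esub> (v * u) = Cs #>\<^bsub>E1G\<^esub> (u * v)"
    using group.repr_independence[OF E1G_group _ _ Cs_sub] uvE by (simp add: E1G_simps)
  then have "hq (u * v) = hq (v * u)" by (simp add: hq_def)
  moreover have "X \<otimes>\<^bsub>Q\<^esub> Y = hq (u * v)" "Y \<otimes>\<^bsub>Q\<^esub> X = hq (v * u)"
    using uv hq_mult by simp_all
  ultimately show "X \<otimes>\<^bsub>Q\<^esub> Y = Y \<otimes>\<^bsub>Q\<^esub> X" by simp
qed

interpretation Qg: comm_group Q by (rule Q_comm)

lemma hq_swap: assumes "eps (a * b) = 0" "eps (b * a) = 0"
  shows "hq (1 + a * b) = hq (1 + b * a)"
proof -
  let ?x = "1 + a * b" and ?y = "1 + b * a"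
  have xy: "?x \<in> E1" "?y \<in> E1" using assms by simp_all
  have g: "?x * rinv ?y \<in> Cs"
    using gens_Cs assms xy unfolding gens_def by (force simp: units_grp_inv E1_unit)
  have gE: "?x * rinv ?y \<in> E1" using xy eps_rinv by simp
  have "hq ?x = hq (?x * rinv ?y * ?y)"
    using rinv_l[OF E1_unit, of ?y] xy by (simp add: mult.assoc)
  also have "\<dots> = hq ?y" using hq_mult[OF gE xy(2)] hq_Cs[OF g] hq_carrier[OF xy(2)] by simp
  finally show ?thesis .
qed

lemma hq_rinv: "u \<in> E1 \<Longrightarrow> hq (rinv u) \<otimes>\<^bsub>Q\<^esub> hq u = \<one>\<^bsub>Q\<^esub>"
  using hq_mult[of "rinv u" u] rinv_l[OF E1_unit, of u] eps_rinv hq_one by simp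

end


context augm begin

interpretation CsN: normal Cs E1G by (rule Cs_normal)
interpretation Qg: comm_group Q by (rule Q_comm)

lemma E1_mult: "u \<in> E1 \<Longrightarrow> v \<in> E1 \<Longrightarrow> u * v \<in> E1" by simp

lemma GS:
  assumes "(\<forall>k<n. eps (u k) = 0) \<or> (\<forall>k<n. eps (w k) = 0)"
  shows "pv n (\<lambda>i k. idm i k + u i * c * w k) \<in> E1 \<and>
         hq (pv n (\<lambda>i k. idm i k + u i * c * w k)) = hq (1 + c * (\<Sum>k<n. w k * u k))"
  using assms
proof (induction n arbitrary: c)
  case 0 then show ?case by simp
next
  case (Suc n)
  let ?M = "\<lambda>i k. idm i k + u i * c * w k"
  let ?x = "1 + u n * c * w n"
  define c' where "c' = c - c * w n * rinv ?x * u n * c"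
  let ?s = "\<Sum>k<n. w k * u k"
  have e0: "eps (u n) * eps c * eps (w n) = 0" "eps (w n) * eps (u n) = 0"
    using Suc.prems by auto
  have xE: "?x \<in> E1" using e0 by simp
  have xu: "isunit ?x" using xE E1_unit by simp
  have hyp: "(\<forall>k<n. eps (u k) = 0) \<or> (\<forall>k<n. eps (w k) = 0)" using Suc.prems by auto
  have sch: "pv n (schur n ?M) = pv n (\<lambda>i k. idm i k + u i * c' * w k)"
  proof (rule pv_cong)
    fix i k assume ik: "i < n" "k < n"
    then show "schur n ?M i k = idm i k + u i * c' * w k"
      by (simp add: schur_def idm_simp c'_def algebra_simps)
  qed
  obtain IH1 IH2 where IH: "pv n (\<lambda>i k. idm i k + u i * c' * w k) \<in> E1"
    "hq (pv n (\<lambda>i k. idm i k + u i * c' * w k)) = hq (1 + c' * ?s)"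
    using Suc.IH[OF hyp, of c'] by blast
  have pvS: "pv (Suc n) ?M = pv n (\<lambda>i k. idm i k + u i * c' * w k) * ?x"
    using sch by (simp add: idm_simp)
  have es: "eps ?s = 0" using hyp by (auto intro!: sum.neutral)
  have yE: "1 + c * w n * u n \<in> E1" using e0 by (simp add: mult.assoc)
  have c'E: "1 + c' * ?s \<in> E1" using es by simp
  have yc: "(1 + c * w n * u n) * c' = c"
  proof -
    have r: "?x * rinv ?x = 1" by (rule rinv_r[OF xu])
    have e1: "rinv ?x * (u n * c) + u n * c * w n * rinv ?x * (u n * c) = u n * c"
    proof -
      have "(rinv ?x + u n * c * w n * rinv ?x) * (u n * c) = u n * c"
        using r by (simp add: algebra_simps)
      then show ?thesis by (simp add: algebra_simps)
    qed
    have "(1 + c * w n * u n) * c' = c + c * w n * u n * c - c * w n * (rinv ?x * (u n * c) + u n * c * w n * rinv ?x * (u n * c))"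
      by (simp add: c'_def algebra_simps)
    also have "\<dots> = c" using e1 by (simp add: algebra_simps)
    finally show ?thesis .
  qed
  have "hq (pv (Suc n) ?M) = hq (1 + c' * ?s) \<otimes>\<^bsub>Q\<^esub> hq ?x"
    using pvS hq_mult[OF IH(1) xE] IH(2) by simp
  also have "hq ?x = hq (1 + c * w n * u n)"
    using hq_swap[of "u n" "c * w n"] e0 by (simp add: mult.assoc)
  also have "hq (1 + c' * ?s) \<otimes>\<^bsub>Q\<^esub> hq (1 + c * w n * u n) = hq ((1 + c * w n * u n) * (1 + c' * ?s))"
    using hq_mult[OF yE c'E] hq_carrier[OF yE] hq_carrier[OF c'E] by (simp add: Qg.m_comm)
  also have "(1 + c * w n * u n) * (1 + c' * ?s) = 1 + c * (\<Sum>k<Suc n. w k * u k)"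
  proof -
    have "(1 + c * w n * u n) * (1 + c' * ?s) = 1 + c * w n * u n + ((1 + c * w n * u n) * c') * ?s"
      by (simp add: algebra_simps)
    also have "\<dots> = 1 + c * (\<Sum>k<Suc n. w k * u k)" using yc by (simp add: algebra_simps)
    finally show ?thesis .
  qed
  finally show ?case using pvS IH(1) xE by simp
qed

abbreviation PP :: "nat \<Rightarrow> (nat \<Rightarrow> nat \<Rightarrow> 'b) \<Rightarrow> bool" where "PP \<equiv> Pn eps"

lemma PP_mm: "PP n X \<Longrightarrow> PP n Y \<Longrightarrow> PP n (mm n X Y)"
  unfolding Pn_def by (simp add: mm_def sum_idm_left)

lemma PP_schur: "PP (Suc m) X \<Longrightarrow> PP m (schur m X)"
  unfolding Pn_def by (simp add: schur_def idm_simp)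

lemma PP_E1: "PP (Suc m) X \<Longrightarrow> X m m \<in> E1"
  unfolding Pn_def by (simp add: idm_simp)

lemma PP_unit: "PP (Suc m) X \<Longrightarrow> isunit (X m m)"
  using PP_E1 E1_unit by simp

lemma PP_pv: "PP n X \<Longrightarrow> pv n X \<in> E1"
proof (induction n arbitrary: X)
  case 0 then show ?case by simp
next
  case (Suc n)
  then show ?case using PP_schur[OF Suc.prems] PP_E1[OF Suc.prems] by simp
qed

lemma PP_cong: "PP n X \<Longrightarrow> (\<And>i k. i < n \<Longrightarrow> k < n \<Longrightarrow> X i k = Y i k) \<Longrightarrow> PP n Y"
  unfolding Pn_def by simp

lemma PP_Umat: "(\<And>i. i < m \<Longrightarrow> eps (g i) = 0) \<Longrightarrow> PP (Suc m) (Umat m g)"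
  unfolding Pn_def Umat_def by (simp add: R_def trunc_def)

lemma PP_Lmat: "(\<And>i. i < m \<Longrightarrow> eps (g i) = 0) \<Longrightarrow> PP (Suc m) (Lmat m g)"
  unfolding Pn_def Lmat_def by (simp add: R_def trunc_def)

lemma PP_dg: "PP m S \<Longrightarrow> eps x = 1 \<Longrightarrow> PP (Suc m) (dg m S x)"
  unfolding Pn_def dg_def by (auto simp: idm_simp less_Suc_eq)

lemma PP_gX: "PP (Suc m) X \<Longrightarrow> i < m \<Longrightarrow> eps (gX m X i) = 0"
  unfolding Pn_def gX_def by (simp add: idm_simp)

lemma PP_rX: "PP (Suc m) X \<Longrightarrow> i < m \<Longrightarrow> eps (rX m X i) = 0"
  unfolding Pn_def rX_def by (simp add: idm_simp)

lemma MUL: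
  "PP n X \<Longrightarrow> PP n Y \<Longrightarrow> hq (pv n (mm n X Y)) = hq (pv n X) \<otimes>\<^bsub>Q\<^esub> hq (pv n Y)"
proof (induction n arbitrary: X Y)
  case 0 then show ?case using hq_one by simp
next
  case (Suc m)
  let ?n = "Suc m"
  let ?x = "X m m" and ?y = "Y m m"
  let ?SX = "schur m X" and ?SY = "schur m Y"
  let ?UX = "Umat m (gX m X)" and ?DX = "dg m ?SX ?x" and ?LX = "Lmat m (rX m X)"
  let ?UY = "Umat m (gX m Y)" and ?DY = "dg m ?SY ?y" and ?LY = "Lmat m (rX m Y)"
  have X: "PP ?n X" and Y: "PP ?n Y" by fact+
  have xE: "?x \<in> E1" "?y \<in> E1" using PP_E1 X Y by auto
  have xu: "isunit ?x" "isunit ?y" using PP_unit X Y by auto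
  have PSX: "PP m ?SX" "PP m ?SY" using PP_schur X Y by auto
  have PU: "PP ?n ?UX" "PP ?n ?UY" using PP_Umat PP_gX X Y by auto
  have PL: "PP ?n ?LX" "PP ?n ?LY" using PP_Lmat PP_rX X Y by auto
  have PD: "PP ?n ?DX" "PP ?n ?DY" using PP_dg PSX xE by auto
  define V where "V = mm ?n ?LX ?UY"
  define T where "T = mm ?n (mm ?n V ?DY) ?LY"
  have PV: "PP ?n V" unfolding V_def using PL PU PP_mm by blast
  have PVD: "PP ?n (mm ?n V ?DY)" using PV PD PP_mm by blast
  have PT: "PP ?n T" unfolding T_def using PVD PL PP_mm by blast
  have PDT: "PP ?n (mm ?n ?DX T)" using PD PT PP_mm by blast
  have fX: "\<And>i k. i < ?n \<Longrightarrow> k < ?n \<Longrightarrow> mm ?n ?UX (mm ?n ?DX ?LX) i k = X i k"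
    using factor_blk xu by blast
  have fY: "\<And>i k. i < ?n \<Longrightarrow> k < ?n \<Longrightarrow> mm ?n ?UY (mm ?n ?DY ?LY) i k = Y i k"
    using factor_blk xu by blast
  have A: "pv ?n (mm ?n X Y) = pv ?n (mm ?n (mm ?n ?UX (mm ?n ?DX ?LX)) (mm ?n ?UY (mm ?n ?DY ?LY)))"
    by (rule pv_cong, rule mm_cong) (simp_all add: fX fY)
  have B: "mm ?n (mm ?n ?UX (mm ?n ?DX ?LX)) (mm ?n ?UY (mm ?n ?DY ?LY)) = mm ?n ?UX (mm ?n ?DX T)"
    unfolding T_def V_def by (simp only: mm_assoc)
  have C: "pv ?n (mm ?n ?UX (mm ?n ?DX T)) = pv ?n (mm ?n ?DX T)"
    by (rule pv_Umat_left) (rule PP_unit[OF PDT])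
  have D: "pv ?n (mm ?n ?DX T) = pv m (mm m ?SX (schur m T)) * (?x * T m m)"
    by (rule pv_dg_left) (rule xu(1), rule PP_unit[OF PT])
  have E: "pv ?n T = pv m (mm m (schur m V) ?SY) * (V m m * ?y)"
  proof -
    have "pv ?n T = pv ?n (mm ?n V ?DY)" unfolding T_def by (rule pv_Lmat_right) (rule PP_unit[OF PVD])
    also have "\<dots> = pv m (mm m (schur m V) ?SY) * (V m m * ?y)"
      by (rule pv_dg_right) (rule xu(2), rule PP_unit[OF PV])
    finally show ?thesis .
  qed
  have F: "hq (pv m (schur m V)) \<otimes>\<^bsub>Q\<^esub> hq (V m m) = \<one>\<^bsub>Q\<^esub>"
  proof -
    let ?r = "rX m X" and ?g = "gX m Y"
    let ?q = "1 + dot m ?r ?g"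
    have qE: "?q \<in> E1" using PP_rX[OF X] by (simp add: dot_def)
    have "pv ?n V = pv m (\<lambda>i k. idm i k + ?g i * (- rinv ?q) * ?r k) * ?q"
      unfolding V_def by (rule pv_LU)
    moreover have G: "pv m (\<lambda>i k. idm i k + ?g i * (- rinv ?q) * ?r k) \<in> E1 \<and>
        hq (pv m (\<lambda>i k. idm i k + ?g i * (- rinv ?q) * ?r k)) = hq (1 + - rinv ?q * (\<Sum>k<m. ?r k * ?g k))"
      using PP_gX[OF Y] by (intro GS) auto
    moreover have "1 + - rinv ?q * (\<Sum>k<m. ?r k * ?g k) = rinv ?q"
    proof -
      have "rinv ?q * ?q = 1" by (rule rinv_l[OF E1_unit]) (use qE in simp)
      then have "rinv ?q + rinv ?q * dot m ?r ?g = 1" by (simp add: algebra_simps)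
      then show ?thesis by (simp add: dot_def algebra_simps)
    qed
    ultimately have "hq (pv ?n V) = hq (rinv ?q) \<otimes>\<^bsub>Q\<^esub> hq ?q"
      using hq_mult qE by simp
    also have "\<dots> = \<one>\<^bsub>Q\<^esub>" by (rule hq_rinv[OF qE])
    finally have "hq (pv ?n V) = \<one>\<^bsub>Q\<^esub>" .
    then show ?thesis using hq_mult PP_pv[OF PP_schur[OF PV]] PP_E1[OF PV] by simp
  qed
  have cQ: "hq (pv m ?SX) \<in> carrier Q" "hq (pv m ?SY) \<in> carrier Q" "hq ?x \<in> carrier Q" "hq ?y \<in> carrier Q"
    "hq (pv m (schur m T)) \<in> carrier Q" "hq (T m m) \<in> carrier Q"
    "hq (pv m (schur m V)) \<in> carrier Q" "hq (V m m) \<in> carrier Q"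
    using hq_carrier PP_pv PSX xE PP_schur PT PV PP_E1 by auto
  have H1: "hq (pv ?n (mm ?n X Y)) = hq (pv m ?SX) \<otimes>\<^bsub>Q\<^esub> hq (pv m (schur m T)) \<otimes>\<^bsub>Q\<^esub> (hq ?x \<otimes>\<^bsub>Q\<^esub> hq (T m m))"
    using A B C D Suc.IH[OF PSX(1) PP_schur[OF PT]] hq_mult PP_pv PP_mm PSX PP_schur[OF PT] xE PP_E1[OF PT]
    by (simp add: PP_pv PP_mm)
  have H2: "hq (pv m (schur m T)) \<otimes>\<^bsub>Q\<^esub> hq (T m m) =
      hq (pv m (schur m V)) \<otimes>\<^bsub>Q\<^esub> hq (pv m ?SY) \<otimes>\<^bsub>Q\<^esub> (hq (V m m) \<otimes>\<^bsub>Q\<^esub> hq ?y)"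
  proof -
    have "hq (pv m (schur m T)) \<otimes>\<^bsub>Q\<^esub> hq (T m m) = hq (pv ?n T)"
      using hq_mult PP_pv[OF PP_schur[OF PT]] PP_E1[OF PT] by simp
    also have "\<dots> = hq (pv m (mm m (schur m V) ?SY)) \<otimes>\<^bsub>Q\<^esub> hq (V m m * ?y)"
      unfolding E using hq_mult PP_pv PP_mm PP_schur[OF PV] PSX(2) PP_E1[OF PV] xE by simp
    also have "\<dots> = hq (pv m (schur m V)) \<otimes>\<^bsub>Q\<^esub> hq (pv m ?SY) \<otimes>\<^bsub>Q\<^esub> (hq (V m m) \<otimes>\<^bsub>Q\<^esub> hq ?y)"
      using Suc.IH[OF PP_schur[OF PV] PSX(2)] hq_mult PP_E1[OF PV] xE by simp
    finally show ?thesis .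
  qed
  have H3: "hq (pv ?n X) = hq (pv m ?SX) \<otimes>\<^bsub>Q\<^esub> hq ?x" "hq (pv ?n Y) = hq (pv m ?SY) \<otimes>\<^bsub>Q\<^esub> hq ?y"
    using hq_mult PP_pv PSX xE by simp_all
  have "hq (pv ?n (mm ?n X Y)) = hq (pv m ?SX) \<otimes>\<^bsub>Q\<^esub> hq ?x \<otimes>\<^bsub>Q\<^esub> (hq (pv m (schur m T)) \<otimes>\<^bsub>Q\<^esub> hq (T m m))"
    unfolding H1 using cQ by (simp add: Qg.m_ac)
  also have "\<dots> = hq (pv m ?SX) \<otimes>\<^bsub>Q\<^esub> hq ?x \<otimes>\<^bsub>Q\<^esub> (hq (pv m (schur m V)) \<otimes>\<^bsub>Q\<^esub> hq (V m m)) \<otimes>\<^bsub>Q\<^esub> (hq (pv m ?SY) \<otimes>\<^bsub>Q\<^esub> hq ?y)"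
    unfolding H2 using cQ by (simp add: Qg.m_ac)
  also have "\<dots> = hq (pv ?n X) \<otimes>\<^bsub>Q\<^esub> hq (pv ?n Y)"
    unfolding F H3 using cQ by simp
  finally show ?case .
qed

end


definition ginv :: "(nat \<Rightarrow> nat \<Rightarrow> 'a::ring_1) \<Rightarrow> nat \<Rightarrow> nat \<Rightarrow> 'a" where
  "ginv M = inv\<^bsub>GL_group\<^esub> M"

definition cj :: "(nat \<Rightarrow> nat \<Rightarrow> 'a::ring_1) \<Rightarrow> (nat \<Rightarrow> nat \<Rightarrow> 'a) \<Rightarrow> nat \<Rightarrow> nat \<Rightarrow> 'a" where
  "cj Z A = mmul Z (mmul A (ginv Z))"

lemma GL_mmul_closed: "x \<in> carrier GL_group \<Longrightarrow> y \<in> carrier GL_group \<Longrightarrow> mmul x y \<in> carrier GL_group"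
  using GLG.m_closed by (simp add: GL_mult)
lemma GL_assoc: "x \<in> carrier GL_group \<Longrightarrow> y \<in> carrier GL_group \<Longrightarrow> z \<in> carrier GL_group \<Longrightarrow>
  mmul (mmul x y) z = mmul x (mmul y z)"
  using GLG.m_assoc by (simp add: GL_mult)
lemma ginv_closed: "x \<in> carrier GL_group \<Longrightarrow> ginv x \<in> carrier GL_group"
  unfolding ginv_def by (rule GLG.inv_closed)
lemma ginv_r: "x \<in> carrier GL_group \<Longrightarrow> mmul x (ginv x) = idm"
  unfolding ginv_def using GLG.r_inv by (simp add: GL_mult GL_one)
lemma ginv_l: "x \<in> carrier GL_group \<Longrightarrow> mmul (ginv x) x = idm"
  unfolding ginv_def using GLG.l_inv by (simp add: GL_mult GL_one)
lemma ginv_mult: "x \<in> carrier GL_group \<Longrightarrow> y \<in> carrier GL_group \<Longrightarrow> ginv (mmul x y) = mmul (ginv y) (ginv x)"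
  unfolding ginv_def using GLG.inv_mult_group by (simp add: GL_mult)
lemma ginv_idm: "ginv idm = idm"
  unfolding ginv_def using GLG.inv_one by (simp add: GL_one)
lemma idm_GL: "idm \<in> carrier GL_group" using GLG.one_closed by (simp add: GL_one)
lemma GL_idm_left: "mmul idm x = x" by (rule mmul_idm_left)
lemma GL_idm_right: "x \<in> carrier GL_group \<Longrightarrow> mmul x idm = x"
  using GLG.r_one by (simp add: GL_mult GL_one)

lemma cj_GL: "Z \<in> carrier GL_group \<Longrightarrow> A \<in> carrier GL_group \<Longrightarrow> cj Z A \<in> carrier GL_group"
  unfolding cj_def by (intro GL_mmul_closed ginv_closed)

lemma cj_mult: assumes "Z \<in> carrier GL_group" "A \<in> carrier GL_group" "B \<in> carrier GL_group"
  shows "cj Z (mmul A B) = mmul (cj Z A) (cj Z B)"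
proof -
  have "mmul (cj Z A) (cj Z B) = mmul Z (mmul A (mmul (mmul (ginv Z) Z) (mmul B (ginv Z))))"
    using assms by (simp add: cj_def GL_assoc GL_mmul_closed ginv_closed GL_idm_left)
  also have "\<dots> = cj Z (mmul A B)"
    using assms by (simp add: ginv_l cj_def GL_assoc GL_mmul_closed ginv_closed GL_idm_left)
  finally show ?thesis by simp
qed

lemma cj_idm: "A \<in> carrier GL_group \<Longrightarrow> cj idm A = A"
  by (simp add: cj_def ginv_idm GL_idm_right GL_idm_left)

lemma GL_bnd_inv: assumes "M \<in> carrier GL_group"
  obtains n where "bnd n M" "bnd n (ginv M)"
proof -
  obtain a where "bnd a M" using GL_fin[OF assms] by blast
  moreover obtain c where "bnd c (ginv M)" using GL_fin[OF ginv_closed[OF assms]] by blast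
  ultimately have "bnd (max a c) M" "bnd (max a c) (ginv M)" by (auto intro: bnd_mono)
  then show ?thesis using that by blast
qed

context augm begin

interpretation CsN: normal Cs E1G by (rule Cs_normal)
interpretation Qg: comm_group Q by (rule Q_comm)

definition GI :: "(nat \<Rightarrow> nat \<Rightarrow> 'b) set" where
  "GI = {N \<in> carrier GL_group. mapm eps N = idm}"

lemma GI_entry: "N \<in> GI \<Longrightarrow> eps (N i k) = idm i k"
  unfolding GI_def mapm_def by (auto dest: fun_cong)

lemma GI_PP: "N \<in> GI \<Longrightarrow> PP n N"
  unfolding Pn_def using GI_entry by blast

lemma GI_GL: "N \<in> GI \<Longrightarrow> N \<in> carrier GL_group" by (simp add: GI_def)

lemma GI_I: "bnd n N \<Longrightarrow> (\<And>i k. eps (N i k) = idm i k) \<Longrightarrow> N \<in> GI"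
  unfolding GI_def using local_GL by (auto simp: mapm_def fun_eq_iff)

lemma GI_mult: assumes "A \<in> GI" "B \<in> GI" shows "mmul A B \<in> GI"
proof -
  have "mapm eps (mmul A B) = mmul (mapm eps A) (mapm eps B)"
    using assms by (intro mapm_mmul_fin[OF eps_rh]) (auto simp: GI_def GL_fin_mat)
  then show ?thesis using assms by (simp add: GI_def GL_mmul_closed mmul_idm_left)
qed

lemma GI_cj: assumes Z: "Z \<in> carrier GL_group" and N: "N \<in> GI" shows "cj Z N \<in> GI"
proof -
  interpret h: group_hom GL_group GL_group "mapm eps" by (rule mapm_group_hom[OF eps_rh])
  have NG: "N \<in> carrier GL_group" using N by (simp add: GI_def)
  have "mapm eps (cj Z N) = mmul (mapm eps Z) (mmul (mapm eps N) (mapm eps (ginv Z)))"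
    unfolding cj_def using h.hom_mult[of Z "mmul N (ginv Z)"] h.hom_mult[of N "ginv Z"] Z NG ginv_closed[OF Z]
      GL_mmul_closed[OF NG ginv_closed[OF Z]] by (simp add: GL_mult)
  also have "\<dots> = mmul (mapm eps Z) (ginv (mapm eps Z))"
    using N h.hom_inv[OF Z] by (simp add: GI_def mmul_idm_left ginv_def)
  also have "\<dots> = idm" by (rule ginv_r[OF mapm_GL[OF eps_rh Z]])
  finally show ?thesis using cj_GL[OF Z NG] by (simp add: GI_def)
qed

definition bd :: "(nat \<Rightarrow> nat \<Rightarrow> 'b) \<Rightarrow> nat" where "bd N = (LEAST n. bnd n N)"

definition dlt :: "(nat \<Rightarrow> nat \<Rightarrow> 'b) \<Rightarrow> 'b set" where "dlt N = hq (pv (bd N) N)"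

lemma dlt_eq: assumes "bnd n N" shows "dlt N = hq (pv n N)"
proof -
  have b: "bnd (bd N) N" unfolding bd_def using assms by (rule LeastI)
  have le: "bd N \<le> n" unfolding bd_def using assms by (rule Least_le)
  show ?thesis unfolding dlt_def using pv_stab[OF b le] by simp
qed

lemma dlt_carrier: assumes "N \<in> GI" shows "dlt N \<in> carrier Q"
proof -
  obtain n where "bnd n N" using GL_fin[OF GI_GL[OF assms]] by blast
  then show ?thesis using dlt_eq hq_carrier PP_pv GI_PP assms by simp
qed

lemma dlt_mult: assumes A: "A \<in> GI" and B: "B \<in> GI" shows "dlt (mmul A B) = dlt A \<otimes>\<^bsub>Q\<^esub> dlt B"
proof -
  obtain a where "bnd a A" using GL_fin[OF GI_GL[OF A]] by blast
  moreover obtain c where "bnd c B" using GL_fin[OF GI_GL[OF B]] by blast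
  ultimately have b: "bnd (max a c) A" "bnd (max a c) B" by (auto intro: bnd_mono)
  let ?n = "max a c"
  have "dlt (mmul A B) = hq (pv ?n (mmul A B))" by (rule dlt_eq[OF bnd_mmul[OF b]])
  also have "pv ?n (mmul A B) = pv ?n (mm ?n A B)"
    by (rule pv_cong) (simp add: mmul_blk[OF b(1)])
  also have "hq (pv ?n (mm ?n A B)) = hq (pv ?n A) \<otimes>\<^bsub>Q\<^esub> hq (pv ?n B)"
    by (rule MUL) (use GI_PP A B in auto)
  finally show ?thesis using dlt_eq b by simp
qed

lemma dlt_idm: "dlt idm = \<one>\<^bsub>Q\<^esub>"
  using dlt_eq[OF bnd_idm[of 0]] hq_one by simp

lemma dlt_cj_R0:
  assumes Z: "Z \<in> carrier GL_group" and v: "vsupp n a" "vsupp n b"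
    and h: "(\<forall>k. eps (a k) = 0) \<or> (\<forall>k. eps (b k) = 0)"
  shows "dlt (cj Z (R a b)) = hq (1 + dot n b a)"
proof -
  obtain n0 where n0: "bnd n0 Z" "bnd n0 (ginv Z)" using GL_bnd_inv[OF Z] by blast
  let ?n = "max n n0"
  have bz: "bnd ?n Z" "bnd ?n (ginv Z)" using n0 by (auto intro: bnd_mono)
  have v': "vsupp ?n a" "vsupp ?n b" using v by (auto intro: vsupp_mono)
  have zz: "mmul Z (ginv Z) = idm" "mmul (ginv Z) Z = idm" using ginv_r ginv_l Z by auto
  have c: "cj Z (R a b) = R (mv ?n Z a) (vm ?n b (ginv Z))"
    unfolding cj_def by (rule conj_R[OF bz zz(1) v'])
  have bR: "bnd ?n (R (mv ?n Z a) (vm ?n b (ginv Z)))"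
    by (intro bnd_R vsupp_mv vsupp_vm bz)
  have R1: "R (mv ?n Z a) (vm ?n b (ginv Z)) = (\<lambda>i k. idm i k + mv ?n Z a i * 1 * vm ?n b (ginv Z) k)"
    by (simp add: R_def)
  have h': "(\<forall>k<?n. eps (mv ?n Z a k) = 0) \<or> (\<forall>k<?n. eps (vm ?n b (ginv Z) k) = 0)"
    using h by (auto simp: mv_def vm_def)
  have "dlt (cj Z (R a b)) = hq (pv ?n (\<lambda>i k. idm i k + mv ?n Z a i * 1 * vm ?n b (ginv Z) k))"
    using dlt_eq[OF bR] c R1 by simp
  also have "\<dots> = hq (1 + 1 * (\<Sum>k<?n. vm ?n b (ginv Z) k * mv ?n Z a k))"
    using GS[OF h'] by blast
  also have "(\<Sum>k<?n. vm ?n b (ginv Z) k * mv ?n Z a k) = dot ?n b a"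
    using dot_conj[OF bz(1,2) zz(2) v'] by (simp add: dot_def)
  also have "dot ?n b a = dot n b a"
    unfolding dot_def by (rule sum_vsupp_right[OF v(1)]) simp
  finally show ?thesis by simp
qed

lemma R_GI: assumes v: "vsupp n a" "vsupp n b" and h: "(\<forall>k. eps (a k) = 0) \<or> (\<forall>k. eps (b k) = 0)"
  shows "R a b \<in> GI"
  using h by (intro GI_I[OF bnd_R[OF v]]) (auto simp: R_def)

lemma dlt_cj_R:
  assumes Z: "Z \<in> carrier GL_group" and v: "vsupp n a" "vsupp n b"
    and h: "(\<forall>k. eps (a k) = 0) \<or> (\<forall>k. eps (b k) = 0)"
  shows "dlt (cj Z (R a b)) = dlt (R a b)"
  using dlt_cj_R0[OF Z v h] dlt_cj_R0[OF idm_GL v h] cj_idm[OF GI_GL[OF R_GI[OF v h]]] by simp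

lemma decomp_GI:
  assumes N: "N \<in> GI" and b: "bnd (Suc t) N"
  shows "N = mmul (Umat t (gX t N)) (mmul (mmul (ext t (schur t N)) (dmat t (N t t))) (Lmat t (rX t N)))"
    and "Umat t (gX t N) \<in> GI" "Lmat t (rX t N) \<in> GI" "ext t (schur t N) \<in> GI" "dmat t (N t t) \<in> GI"
    and "bnd t (ext t (schur t N))"
    and "Umat t (gX t N) = R (trunc t (gX t N)) (ev t)" "Lmat t (rX t N) = R (ev t) (trunc t (rX t N))"
    and "dmat t (N t t) = R (ev t) (\<lambda>k. if k = t then N t t - 1 else 0)"
    and "\<forall>k. eps (trunc t (gX t N) k) = 0" "\<forall>k. eps (trunc t (rX t N) k) = 0"
    and "\<forall>k. eps ((\<lambda>k. if k = t then N t t - 1 else 0) k) = 0"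
proof -
  have P: "PP (Suc t) N" by (rule GI_PP[OF N])
  have u: "isunit (N t t)" by (rule PP_unit[OF P])
  show "N = mmul (Umat t (gX t N)) (mmul (mmul (ext t (schur t N)) (dmat t (N t t))) (Lmat t (rX t N)))"
    using decomp[OF b u] by (simp add: dg_ext)
  show eU: "\<forall>k. eps (trunc t (gX t N) k) = 0" using PP_gX[OF P] by (simp add: trunc_def)
  show eL: "\<forall>k. eps (trunc t (rX t N) k) = 0" using PP_rX[OF P] by (simp add: trunc_def)
  show eD: "\<forall>k. eps ((\<lambda>k. if k = t then N t t - 1 else 0) k) = 0" using PP_E1[OF P] by simp
  show Ueq: "Umat t (gX t N) = R (trunc t (gX t N)) (ev t)" by (simp add: Umat_def)
  show Leq: "Lmat t (rX t N) = R (ev t) (trunc t (rX t N))" by (simp add: Lmat_def)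
  show Deq: "dmat t (N t t) = R (ev t) (\<lambda>k. if k = t then N t t - 1 else 0)" by (rule dmat_R)
  have v: "vsupp (Suc t) (trunc t g)" "vsupp (Suc t) (ev t)" for g :: "nat \<Rightarrow> 'b"
    by (auto intro: vsupp_trunc vsupp_ev)
  have vD: "vsupp (Suc t) (\<lambda>k. if k = t then N t t - 1 else 0)" by (simp add: vsupp_def)
  show "Umat t (gX t N) \<in> GI" unfolding Ueq using eU by (intro R_GI[OF v]) auto
  show "Lmat t (rX t N) \<in> GI" unfolding Leq using eL by (intro R_GI[OF v(2) v(1)]) auto
  show "dmat t (N t t) \<in> GI" unfolding Deq using eD by (intro R_GI[OF v(2) vD]) auto
  show "bnd t (ext t (schur t N))" by (rule bnd_ext)
  show "ext t (schur t N) \<in> GI"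
    using PP_schur[OF P] by (intro GI_I[OF bnd_ext]) (auto simp: ext_def Pn_def)
qed

lemma bnd0_idm: "bnd 0 N \<Longrightarrow> N = idm"
  by (rule bnd_eqI[OF _ bnd_idm]) auto

lemma CONJ: assumes Z: "Z \<in> carrier GL_group" shows "N \<in> GI \<Longrightarrow> bnd t N \<Longrightarrow> dlt (cj Z N) = dlt N"
proof (induction t arbitrary: N)
  case 0
  then have "N = idm" by (simp add: bnd0_idm)
  then show ?case using Z by (simp add: cj_def GL_idm_left ginv_r)
next
  case (Suc t)
  note D = decomp_GI[OF Suc.prems]
  let ?U = "Umat t (gX t N)" and ?L = "Lmat t (rX t N)" and ?E = "ext t (schur t N)" and ?D = "dmat t (N t t)"
  have G: "?U \<in> carrier GL_group" "?L \<in> carrier GL_group" "?E \<in> carrier GL_group" "?D \<in> carrier GL_group"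
    using D GI_GL by auto
  have v: "vsupp (Suc t) (trunc t g)" "vsupp (Suc t) (ev t)" for g :: "nat \<Rightarrow> 'b"
    by (auto intro: vsupp_trunc vsupp_ev)
  have vD: "vsupp (Suc t) (\<lambda>k. if k = t then N t t - 1 else 0)" by (simp add: vsupp_def)
  have cU: "dlt (cj Z ?U) = dlt ?U" unfolding D(7) using D(10) by (intro dlt_cj_R[OF Z v]) auto
  have cL: "dlt (cj Z ?L) = dlt ?L" unfolding D(8) using D(11) by (intro dlt_cj_R[OF Z v(2) v(1)]) auto
  have cD: "dlt (cj Z ?D) = dlt ?D" unfolding D(9) using D(12) by (intro dlt_cj_R[OF Z v(2) vD]) auto
  have cE: "dlt (cj Z ?E) = dlt ?E" by (rule Suc.IH[OF D(4) D(6)])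
  have GIc: "cj Z ?U \<in> GI" "cj Z ?L \<in> GI" "cj Z ?E \<in> GI" "cj Z ?D \<in> GI"
    using GI_cj[OF Z] D by auto
  have "cj Z N = mmul (cj Z ?U) (mmul (mmul (cj Z ?E) (cj Z ?D)) (cj Z ?L))"
    using G Z by (subst D(1)) (simp add: cj_mult GL_mmul_closed)
  then have "dlt (cj Z N) = dlt (cj Z ?U) \<otimes>\<^bsub>Q\<^esub> ((dlt (cj Z ?E) \<otimes>\<^bsub>Q\<^esub> dlt (cj Z ?D)) \<otimes>\<^bsub>Q\<^esub> dlt (cj Z ?L))"
    using GIc by (simp add: dlt_mult GI_mult)
  also have "\<dots> = dlt ?U \<otimes>\<^bsub>Q\<^esub> ((dlt ?E \<otimes>\<^bsub>Q\<^esub> dlt ?D) \<otimes>\<^bsub>Q\<^esub> dlt ?L)"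
    using cU cL cD cE by simp
  also have "\<dots> = dlt N"
  proof -
    have "dlt N = dlt (mmul ?U (mmul (mmul ?E ?D) ?L))" using D(1) by (rule arg_cong)
    also have "\<dots> = dlt ?U \<otimes>\<^bsub>Q\<^esub> ((dlt ?E \<otimes>\<^bsub>Q\<^esub> dlt ?D) \<otimes>\<^bsub>Q\<^esub> dlt ?L)"
      using D(2-5) by (simp only: dlt_mult GI_mult)
    finally show ?thesis by simp
  qed
  finally show ?case .
qed

lemma CONJ': assumes "Z \<in> carrier GL_group" "N \<in> GI" shows "dlt (cj Z N) = dlt N"
proof -
  obtain t where "bnd t N" using GL_fin[OF GI_GL[OF assms(2)]] by blast
  then show ?thesis using CONJ[OF assms(1) assms(2)] by blast
qed

lemma RED: "N \<in> GI \<Longrightarrow> bnd t N \<Longrightarrow> K1class N = K1class (unit_mat (pv t N))"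
proof (induction t arbitrary: N)
  case 0
  then have "N = idm" by (simp add: bnd0_idm)
  then show ?case by (simp add: unit_mat_dmat dmat_one)
next
  case (Suc t)
  note D = decomp_GI[OF Suc.prems]
  have P: "PP (Suc t) N" by (rule GI_PP[OF Suc.prems(1)])
  have eq: "pv t (ext t (schur t N)) = pv t (schur t N)" by (rule pv_cong) (simp add: ext_def)
  have "K1class N = K1class (ext t (schur t N)) \<otimes>\<^bsub>K1\<^esub> K1class (unit_mat (N t t))"
    by (rule decomp_K1[OF Suc.prems(2) PP_unit[OF P] GI_GL[OF D(4)]])
  also have "\<dots> = K1class (unit_mat (pv t (schur t N))) \<otimes>\<^bsub>K1\<^esub> K1class (unit_mat (N t t))"
    using Suc.IH[OF D(4) D(6)] eq by simp
  also have "\<dots> = K1class (unit_mat (pv (Suc t) N))"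
    using K1class_unit_mult[OF E1_unit E1_unit, of "pv t (schur t N)" "N t t"] PP_pv[OF PP_schur[OF P]] PP_E1[OF P]
    by simp
  finally show ?case .
qed

end


lemma mapm_unit_mat: "ring_hom_cls f \<Longrightarrow> mapm f (unit_mat u) = unit_mat (f u)"
  by (auto simp: mapm_def unit_mat_def rh_idm fun_eq_iff)

lemma ginv_cancel: "x \<in> carrier GL_group \<Longrightarrow> y \<in> carrier GL_group \<Longrightarrow> mmul (ginv x) (mmul x y) = y"
  by (simp add: GL_assoc[symmetric] ginv_closed ginv_l GL_idm_left)

context augm begin

interpretation CsN: normal Cs E1G by (rule Cs_normal)
interpretation Qg: comm_group Q by (rule Q_comm)

definition Jm :: "(nat \<Rightarrow> nat \<Rightarrow> 'b) \<Rightarrow> nat \<Rightarrow> nat \<Rightarrow> 'b" where "Jm M = mapm j (mapm eps M)"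
definition NMx :: "(nat \<Rightarrow> nat \<Rightarrow> 'b) \<Rightarrow> nat \<Rightarrow> nat \<Rightarrow> 'b" where "NMx M = mmul M (ginv (Jm M))"
definition Del :: "(nat \<Rightarrow> nat \<Rightarrow> 'b) \<Rightarrow> 'b set" where "Del M = dlt (NMx M)"

lemma Jm_GL: "M \<in> carrier GL_group \<Longrightarrow> Jm M \<in> carrier GL_group"
  unfolding Jm_def by (intro mapm_GL[OF j_rh] mapm_GL[OF eps_rh])

lemma mapm_mult_GL: "ring_hom_cls f \<Longrightarrow> x \<in> carrier GL_group \<Longrightarrow> y \<in> carrier GL_group \<Longrightarrow>
   mapm f (mmul x y) = mmul (mapm f x) (mapm f y)"
  by (simp add: mapm_mmul_fin GL_fin_mat)

lemma Jm_mult: "M1 \<in> carrier GL_group \<Longrightarrow> M2 \<in> carrier GL_group \<Longrightarrow> Jm (mmul M1 M2) = mmul (Jm M1) (Jm M2)"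
  unfolding Jm_def by (simp add: mapm_mult_GL[OF eps_rh] mapm_mult_GL[OF j_rh] mapm_GL[OF eps_rh])

lemma eps_Jm: "mapm eps (Jm M) = mapm eps M"
  unfolding Jm_def mapm_comp by (simp add: eps_j mapm_def)

lemma mapm_ginv: assumes f: "ring_hom_cls f" and M: "M \<in> carrier GL_group"
  shows "mapm f (ginv M) = ginv (mapm f M)"
proof -
  interpret h: group_hom GL_group GL_group "mapm f" by (rule mapm_group_hom[OF f])
  show ?thesis unfolding ginv_def by (rule h.hom_inv[OF M])
qed

lemma NMx_GL: "M \<in> carrier GL_group \<Longrightarrow> NMx M \<in> carrier GL_group"
  unfolding NMx_def by (intro GL_mmul_closed ginv_closed Jm_GL)

lemma NMx_GI: assumes M: "M \<in> carrier GL_group" shows "NMx M \<in> GI"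
proof -
  have "mapm eps (NMx M) = mmul (mapm eps M) (mapm eps (ginv (Jm M)))"
    unfolding NMx_def by (rule mapm_mult_GL[OF eps_rh M ginv_closed[OF Jm_GL[OF M]]])
  also have "\<dots> = mmul (mapm eps M) (ginv (mapm eps M))"
    by (simp add: mapm_ginv[OF eps_rh Jm_GL[OF M]] eps_Jm)
  also have "\<dots> = idm" by (rule ginv_r[OF mapm_GL[OF eps_rh M]])
  finally show ?thesis using NMx_GL[OF M] by (simp add: GI_def)
qed

lemma Del_carrier: "M \<in> carrier GL_group \<Longrightarrow> Del M \<in> carrier Q"
  unfolding Del_def by (rule dlt_carrier[OF NMx_GI])

lemma Del_mult: assumes M1: "M1 \<in> carrier GL_group" and M2: "M2 \<in> carrier GL_group"
  shows "Del (mmul M1 M2) = Del M1 \<otimes>\<^bsub>Q\<^esub> Del M2"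
proof -
  have J: "Jm M1 \<in> carrier GL_group" "Jm M2 \<in> carrier GL_group" using Jm_GL M1 M2 by auto
  have Ji: "ginv (Jm M1) \<in> carrier GL_group" "ginv (Jm M2) \<in> carrier GL_group" using J ginv_closed by auto
  have M1i: "ginv M1 \<in> carrier GL_group" using ginv_closed M1 by auto
  have "NMx (mmul M1 M2) = mmul (mmul M1 M2) (mmul (ginv (Jm M2)) (ginv (Jm M1)))"
    unfolding NMx_def by (simp add: Jm_mult M1 M2 ginv_mult J)
  also have "\<dots> = mmul M1 (mmul M2 (mmul (ginv (Jm M2)) (ginv (Jm M1))))"
    using M1 M2 Ji by (simp add: GL_assoc GL_mmul_closed)
  also have "\<dots> = mmul (cj M1 (NMx M2)) (NMx M1)"
    unfolding cj_def NMx_def using M1 M2 Ji M1i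
    by (simp add: GL_assoc GL_mmul_closed ginv_cancel)
  finally have e: "NMx (mmul M1 M2) = mmul (cj M1 (NMx M2)) (NMx M1)" .
  have "Del (mmul M1 M2) = dlt (cj M1 (NMx M2)) \<otimes>\<^bsub>Q\<^esub> dlt (NMx M1)"
    unfolding Del_def e by (rule dlt_mult[OF GI_cj[OF M1 NMx_GI[OF M2]] NMx_GI[OF M1]])
  also have "\<dots> = Del M2 \<otimes>\<^bsub>Q\<^esub> Del M1"
    unfolding Del_def by (simp add: CONJ'[OF M1 NMx_GI[OF M2]])
  also have "\<dots> = Del M1 \<otimes>\<^bsub>Q\<^esub> Del M2"
    by (rule Qg.m_comm[OF Del_carrier[OF M2] Del_carrier[OF M1]])
  finally show ?thesis .
qed

lemma Del_hom: "Del \<in> hom GL_group Q"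
  by (rule homI) (simp_all add: Del_carrier Del_mult GL_mult)

lemma Del_DG: assumes d: "d \<in> DG" shows "Del d = \<one>\<^bsub>Q\<^esub>"
proof -
  interpret h: group_hom GL_group Q Del
    by (simp add: group_hom_def group_hom_axioms_def Del_hom GL_group_is_group Q_group)
  have "Del ` DG = derived Q (Del ` carrier GL_group)"
    by (rule h.derived_img[symmetric, OF subset_refl])
  also have "\<dots> \<subseteq> derived Q (carrier Q)"
    by (rule Qg.mono_derived) (use Del_carrier in auto)
  also have "\<dots> = {\<one>\<^bsub>Q\<^esub>}" by (rule Qg.derived_eq_singleton) simp
  finally show ?thesis using d by auto
qed

lemma Del_unit: assumes u: "u \<in> E1" shows "Del (unit_mat u) = hq u"
proof -
  have uu: "isunit u" using u E1_unit by simp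
  have "Jm (unit_mat u) = idm"
    unfolding Jm_def mapm_unit_mat[OF eps_rh] mapm_unit_mat[OF j_rh] using u
    by (simp add: rh_one[OF j_rh] unit_mat_dmat dmat_one)
  then have "NMx (unit_mat u) = unit_mat u"
    unfolding NMx_def by (simp add: ginv_idm GL_idm_right unit_mat_GL[OF uu])
  moreover have "bnd 1 (unit_mat u)" unfolding unit_mat_dmat by (rule bnd_dmat) simp
  ultimately show ?thesis unfolding Del_def using dlt_eq by (simp add: unit_mat_def)
qed

lemma Del_j: assumes X: "X \<in> carrier GL_group" shows "Del (mapm j X) = \<one>\<^bsub>Q\<^esub>"
proof -
  have "Jm (mapm j X) = mapm j X"
    unfolding Jm_def mapm_comp by (simp add: eps_j mapm_def)
  then have "NMx (mapm j X) = idm"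
    unfolding NMx_def by (simp add: ginv_r mapm_GL[OF j_rh X])
  then show ?thesis unfolding Del_def by (simp add: dlt_idm)
qed

definition phi :: "'b \<Rightarrow> (nat \<Rightarrow> nat \<Rightarrow> 'b) set" where "phi u = K1class (unit_mat u)"

lemma phi_hom: "phi \<in> hom UG K1"
  by (rule homI) (simp_all add: phi_def units_grp_carrier units_grp_mult K1class_carrier unit_mat_GL
      K1class_unit_mult)

lemma phi_Cs: assumes c: "c \<in> Cs" shows "phi c = \<one>\<^bsub>K1\<^esub>"
proof -
  interpret h: group_hom UG K1 phi
    by (simp add: group_hom_def group_hom_axioms_def phi_hom units_grp_group K1G.is_group)
  have "gens \<subseteq> kernel UG K1 phi"
  proof
    fix g assume "g \<in> gens"
    then obtain a b where ab: "g = (1 + a * b) * inv\<^bsub>UG\<^esub> (1 + b * a)" "eps (a * b) = 0" "eps (b * a) = 0"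
      by (auto simp: gens_def)
    have E: "1 + a * b \<in> E1" "1 + b * a \<in> E1" using ab by simp_all
    have uu: "isunit (1 + a * b)" "isunit (1 + b * a)" using E E1_unit by auto
    have g: "g = (1 + a * b) * rinv (1 + b * a)" using ab uu by (simp add: units_grp_inv)
    have "phi g = phi (1 + a * b) \<otimes>\<^bsub>K1\<^esub> phi (rinv (1 + b * a))"
      unfolding g phi_def by (rule K1class_unit_mult[OF uu(1) isunit_rinv[OF uu(2)]])
    also have "\<dots> = phi (1 + b * a) \<otimes>\<^bsub>K1\<^esub> phi (rinv (1 + b * a))"
      unfolding phi_def by (simp add: K1class_unit_swap[OF uu])
    also have "\<dots> = phi ((1 + b * a) * rinv (1 + b * a))"
      unfolding phi_def by (rule K1class_unit_mult[OF uu(2) isunit_rinv[OF uu(2)], symmetric])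
    also have "\<dots> = \<one>\<^bsub>K1\<^esub>" unfolding phi_def by (simp add: rinv_r[OF uu(2)] K1class_unit_one)
    finally have "phi g = \<one>\<^bsub>K1\<^esub>" .
    moreover have "g \<in> carrier UG" using \<open>g \<in> gens\<close> gens_E1 by (intro subgroup.mem_carrier[OF E1_sub]) blast
    ultimately show "g \<in> kernel UG K1 phi" by (simp add: kernel_def)
  qed
  then have "Cs \<subseteq> kernel UG K1 phi"
    unfolding Cs_def by (rule UGg.generate_subgroup_incl[OF _ h.subgroup_kernel])
  then show ?thesis using c by (auto simp: kernel_def)
qed

lemma K1unit_hq: assumes u: "u \<in> E1" shows "K1unit (hq u) = phi u"
proof -
  have uu: "isunit u" using u E1_unit by simp
  have "(\<lambda>v. K1class (unit_mat v)) ` (hq u) = {phi u}"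
  proof
    show "(\<lambda>v. K1class (unit_mat v)) ` hq u \<subseteq> {phi u}"
    proof
      fix y assume "y \<in> (\<lambda>v. K1class (unit_mat v)) ` hq u"
      then obtain v where v: "v \<in> hq u" "y = phi v" by (auto simp: phi_def)
      from v(1) obtain c where c: "c \<in> Cs" "v = c * u"
        unfolding hq_def r_coset_def by (auto simp: E1G_simps)
      have cu: "isunit c" using c Cs_E1 E1_unit by auto
      have "y = phi c \<otimes>\<^bsub>K1\<^esub> phi u" using v c by (simp add: phi_def K1class_unit_mult[OF cu uu])
      also have "\<dots> = phi u" using phi_Cs[OF c(1)] by (simp add: phi_def K1class_carrier unit_mat_GL[OF uu])
      finally show "y \<in> {phi u}" by simp
    qed
  next
    have "u \<in> hq u" unfolding hq_def using group.rcos_self[OF E1G_group _ Cs_sub] u by (simp add: E1G_simps)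
    then show "{phi u} \<subseteq> (\<lambda>v. K1class (unit_mat v)) ` hq u" by (auto simp: phi_def)
  qed
  then show ?thesis by (simp add: K1unit_def)
qed

lemma K1unit_hom: "K1unit \<in> hom Q K1"
proof (rule homI)
  fix y assume "y \<in> carrier Q"
  then obtain u where "u \<in> E1" "y = hq u" by (auto simp: Q_carrier)
  then show "K1unit y \<in> carrier K1" using K1unit_hq by (simp add: phi_def K1class_carrier unit_mat_GL E1_unit)
next
  fix x y assume "x \<in> carrier Q" "y \<in> carrier Q"
  then obtain u v where uv: "u \<in> E1" "x = hq u" "v \<in> E1" "y = hq v" by (auto simp: Q_carrier)
  then show "K1unit (x \<otimes>\<^bsub>Q\<^esub> y) = K1unit x \<otimes>\<^bsub>K1\<^esub> K1unit y"
    using hq_mult[OF uv(1,3)] K1unit_hq uv E1_unit by (simp add: phi_def K1class_unit_mult flip: hq_mult)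
qed

end


context augm begin

interpretation CsN: normal Cs E1G by (rule Cs_normal)
interpretation Qg: comm_group Q by (rule Q_comm)

lemma main_loc:
  "Cs \<lhd> E1G \<and> (\<lambda>(x, y). K1map j x \<otimes>\<^bsub>K1\<^esub> K1unit y) \<in> iso ((K1 :: (nat \<Rightarrow> nat \<Rightarrow> 'a) set monoid) \<times>\<times> Q) (K1 :: (nat \<Rightarrow> nat \<Rightarrow> 'b) set monoid)"
proof
  show "Cs \<lhd> E1G" by (rule Cs_normal)
  let ?P = "\<lambda>(x, y). K1map j x \<otimes>\<^bsub>K1\<^esub> K1unit y"
  have hj: "K1map j \<in> hom (K1 :: (nat \<Rightarrow> nat \<Rightarrow> 'a) set monoid) K1" by (rule K1map_hom[OF j_rh])
  have hu: "K1unit \<in> hom Q K1" by (rule K1unit_hom)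
  have Phom: "?P \<in> hom ((K1 :: (nat \<Rightarrow> nat \<Rightarrow> 'a) set monoid) \<times>\<times> Q) K1"
  proof (rule homI)
    fix p assume "p \<in> carrier ((K1 :: (nat \<Rightarrow> nat \<Rightarrow> 'a) set monoid) \<times>\<times> Q)"
    then obtain x y where "p = (x, y)" "x \<in> carrier K1" "y \<in> carrier Q" by auto
    then show "?P p \<in> carrier K1" using hom_in_carrier[OF hj] hom_in_carrier[OF hu] by auto
  next
    fix p q assume "p \<in> carrier ((K1 :: (nat \<Rightarrow> nat \<Rightarrow> 'a) set monoid) \<times>\<times> Q)" "q \<in> carrier ((K1 :: (nat \<Rightarrow> nat \<Rightarrow> 'a) set monoid) \<times>\<times> Q)"
    then obtain x1 y1 x2 y2 where pq: "p = (x1, y1)" "q = (x2, y2)" "x1 \<in> carrier K1" "y1 \<in> carrier Q"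
      "x2 \<in> carrier K1" "y2 \<in> carrier Q" by auto
    have c: "K1map j x1 \<in> carrier K1" "K1map j x2 \<in> carrier K1" "K1unit y1 \<in> carrier K1" "K1unit y2 \<in> carrier K1"
      using hom_in_carrier[OF hj] hom_in_carrier[OF hu] pq by auto
    have "?P (p \<otimes>\<^bsub>K1 \<times>\<times> Q\<^esub> q) = (K1map j x1 \<otimes>\<^bsub>K1\<^esub> K1map j x2) \<otimes>\<^bsub>K1\<^esub> (K1unit y1 \<otimes>\<^bsub>K1\<^esub> K1unit y2)"
      using pq hom_mult[OF hj] hom_mult[OF hu] by simp
    also have "\<dots> = ?P p \<otimes>\<^bsub>K1\<^esub> ?P q" using pq c by (simp add: K1G.m_ac)
    finally show "?P (p \<otimes>\<^bsub>K1 \<times>\<times> Q\<^esub> q) = ?P p \<otimes>\<^bsub>K1\<^esub> ?P q" .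
  qed
  interpret Ph: group_hom "(K1 :: (nat \<Rightarrow> nat \<Rightarrow> 'a) set monoid) \<times>\<times> Q" "K1 :: (nat \<Rightarrow> nat \<Rightarrow> 'b) set monoid" ?P
    by (simp add: group_hom_def group_hom_axioms_def Phom DirProd_group K1G.is_group Q_group)
  show "?P \<in> iso ((K1 :: (nat \<Rightarrow> nat \<Rightarrow> 'a) set monoid) \<times>\<times> Q) K1"
    unfolding Ph.iso_iff
  proof
    show "carrier K1 \<subseteq> ?P ` carrier ((K1 :: (nat \<Rightarrow> nat \<Rightarrow> 'a) set monoid) \<times>\<times> Q)"
    proof
      fix z :: "(nat \<Rightarrow> nat \<Rightarrow> 'b) set" assume "z \<in> carrier K1"
      then obtain M where M: "M \<in> carrier GL_group" "z = K1class M" by (auto simp: K1_carrier)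
      let ?N = "NMx M"
      have N: "?N \<in> GI" by (rule NMx_GI[OF M(1)])
      obtain n where bn: "bnd n ?N" using GL_fin[OF GI_GL[OF N]] by blast
      let ?u = "pv n ?N"
      have uE: "?u \<in> E1" using PP_pv GI_PP[OF N] by blast
      have eM: "mapm eps M \<in> carrier GL_group" by (rule mapm_GL[OF eps_rh M(1)])
      have J: "Jm M \<in> carrier GL_group" by (rule Jm_GL[OF M(1)])
      have NG: "?N \<in> carrier GL_group" by (rule GI_GL[OF N])
      have "?P (K1class (mapm eps M), hq ?u) = K1class (Jm M) \<otimes>\<^bsub>K1\<^esub> K1class ?N"
        using K1map_class[OF j_rh eM] K1unit_hq[OF uE] RED[OF N bn] by (simp add: phi_def Jm_def)
      also have "\<dots> = K1class ?N \<otimes>\<^bsub>K1\<^esub> K1class (Jm M)"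
        by (rule K1G.m_comm[OF K1class_carrier[OF J] K1class_carrier[OF NG]])
      also have "\<dots> = K1class (mmul ?N (Jm M))" by (rule K1class_mult[OF NG J, symmetric])
      also have "mmul ?N (Jm M) = M"
        unfolding NMx_def using M(1) J by (simp add: GL_assoc ginv_closed ginv_l GL_idm_right)
      finally have "?P (K1class (mapm eps M), hq ?u) = z" using M by simp
      moreover have "(K1class (mapm eps M), hq ?u) \<in> carrier ((K1 :: (nat \<Rightarrow> nat \<Rightarrow> 'a) set monoid) \<times>\<times> Q)"
        using K1class_carrier[OF eM] hq_carrier[OF uE] by simp
      ultimately show "z \<in> ?P ` carrier ((K1 :: (nat \<Rightarrow> nat \<Rightarrow> 'a) set monoid) \<times>\<times> Q)" by force
    qed
  next
    show "\<forall>p\<in>carrier ((K1 :: (nat \<Rightarrow> nat \<Rightarrow> 'a) set monoid) \<times>\<times> Q). ?P p = \<one>\<^bsub>K1\<^esub> \<longrightarrow> p = \<one>\<^bsub>(K1 :: (nat \<Rightarrow> nat \<Rightarrow> 'a) set monoid) \<times>\<times> Q\<^esub>"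
    proof (intro ballI impI)
      fix p assume p: "p \<in> carrier ((K1 :: (nat \<Rightarrow> nat \<Rightarrow> 'a) set monoid) \<times>\<times> Q)" and P1: "?P p = \<one>\<^bsub>K1\<^esub>"
      then obtain x y where xy: "p = (x, y)" "x \<in> carrier K1" "y \<in> carrier Q" by auto
      then obtain X u where X: "X \<in> carrier GL_group" "x = K1class X" and u: "u \<in> E1" "y = hq u"
        by (auto simp: K1_carrier Q_carrier)
      have uu: "isunit u" using u E1_unit by simp
      have jX: "mapm j X \<in> carrier GL_group" by (rule mapm_GL[OF j_rh X(1)])
      have uG: "unit_mat u \<in> carrier GL_group" by (rule unit_mat_GL[OF uu])
      let ?M = "mmul (mapm j X) (unit_mat u)"
      have MG: "?M \<in> carrier GL_group" by (rule GL_mmul_closed[OF jX uG])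
      have "K1class ?M = ?P p"
        using xy X u K1map_class[OF j_rh X(1)] K1unit_hq[OF u(1)] K1class_mult[OF jX uG] by (simp add: phi_def)
      then have "K1class ?M = \<one>\<^bsub>K1\<^esub>" using P1 by simp
      then have MD: "?M \<in> DG" using K1class_one_iff[OF MG] by simp
      have "mapm eps ?M = mmul (mapm eps (mapm j X)) (mapm eps (unit_mat u))"
        by (rule mapm_mult_GL[OF eps_rh jX uG])
      also have "\<dots> = X"
        unfolding mapm_comp mapm_unit_mat[OF eps_rh] using u X(1)
        by (simp add: eps_j unit_mat_dmat dmat_one GL_idm_right) (simp add: mapm_def GL_idm_right)
      finally have "X \<in> DG" using mapm_DG[OF eps_rh MD] by simp
      then have x1: "x = \<one>\<^bsub>K1\<^esub>" using X K1class_DG by simp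
      have "\<one>\<^bsub>Q\<^esub> = Del ?M" using Del_DG[OF MD] by simp
      also have "\<dots> = Del (mapm j X) \<otimes>\<^bsub>Q\<^esub> Del (unit_mat u)" by (rule Del_mult[OF jX uG])
      also have "\<dots> = hq u" using Del_j[OF X(1)] Del_unit[OF u(1)] hq_carrier[OF u(1)] by simp
      finally have "y = \<one>\<^bsub>Q\<^esub>" using u by simp
      then show "p = \<one>\<^bsub>(K1 :: (nat \<Rightarrow> nat \<Rightarrow> 'a) set monoid) \<times>\<times> Q\<^esub>" using x1 xy by simp
    qed
  qed
qed

end

theorem mainTheorem2:
  fixes \<epsilon> :: "'b::ring_1 \<Rightarrow> 'a::ring_1" and j :: "'a \<Rightarrow> 'b"
  assumes "local_augmentation \<epsilon> j"
  defines "U \<equiv> (units_grp :: 'b monoid)"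
  defines "E1 \<equiv> {u. \<epsilon> u = 1}"
  defines "C \<equiv> generate U {(1 + a * b) * inv\<^bsub>U\<^esub> (1 + b * a) | a b. \<epsilon> (a * b) = 0 \<and> \<epsilon> (b * a) = 0}"
  shows "C \<lhd> U\<lparr>carrier := E1\<rparr> \<and>
         (\<lambda>(x, y). K1map j x \<otimes>\<^bsub>K1\<^esub> K1unit y)
           \<in> iso ((K1 :: (nat \<Rightarrow> nat \<Rightarrow> 'a) set monoid) \<times>\<times> (U\<lparr>carrier := E1\<rparr> Mod C))
                 (K1 :: (nat \<Rightarrow> nat \<Rightarrow> 'b) set monoid)"
proof -
  interpret A: augm \<epsilon> j by (rule augm.intro) (rule assms(1))
  have E: "E1 = A.E1" by (simp add: E1_def A.E1_def)
  have UE: "U\<lparr>carrier := E1\<rparr> = A.E1G" by (simp add: U_def A.E1G_def E)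
  have CC: "C = A.Cs" by (simp add: C_def A.Cs_def A.gens_def U_def)
  show ?thesis using A.main_loc by (simp add: UE CC A.Q_def)
qed


end
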